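(* For every integer $j$ with $1\le j\le k-2$, $$\partial_{\phi_{k-j-1}}f^{(j)}=U''_{k-j-1}(\phi_{k-j}-\phi_{k-j-1})\;Q\big(Q(\partial_{\phi_{k-j}}f^{(j-1)})\big)+\widehat{\mathcal O}^{\mathrm{fin}}(L^{-2j-1}).$$
   Context: Integers $n\ge2$, $2\le k\le n$. For $i=1,\dots,n-1$, $U_i:\mathbb T\to\mathbb R$ ($\mathbb T=\mathbb R/2\pi\mathbb Z$) real smooth with finitely many Fourier modes, no constant mode, and no $\phi$ with $U_i'(\phi)=U_i''(\phi)=0$. $\mathcal D_{L,r,\sigma}=\{(\mathbf I,\boldsymbol\phi)\in\mathbb C^{2n}:|I_i-L\delta_{i,k}|<rL,|\mathrm{Im}\,\phi_i|<\sigma\ \forall i\}$, $\|f\|_{L,r,\sigma}=\sup_{\mathcal D_{L,r,\sigma}}|f|$. A $\boldsymbol\phi$-periodic $f$ is admissible if there exist $L_0,r,\sigma>0$ with $f$ analytic on $\mathcal D_{L,r,\sigma}$ and $\|f\|_{L,r,\sigma}<\infty$ for all $L\ge L_0$; $f=\widehat{\mathcal O}(L^s)$ means $f$ admissible with $\|f\|_{L,r,\sigma}\le CL^s$ for all $L\ge L_0$, some $r,\sigma,L_0,C>0$; $f=\widehat{\mathcal O}^{\mathrm{fin}}(L^s)$ means in addition that its Fourier series $\sum_{\boldsymbol\mu}f_{\boldsymbol\mu}(\mathbf I)e^{\mathrm i\boldsymbol\mu\cdot\boldsymbol\phi}$ has finitely many modes. $\boldsymbol\mu$ is non-resonant iff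 $\mu_k\ne0$; $f^{\mathrm{NR}},f^{\mathrm R}$ are the non-resonant/resonant parts; $Qf=-\mathrm i\sum_{\mu_k\ne0}\frac{f_{\boldsymbol\mu}(\mathbf I)}{\mathbf I\cdot\boldsymbol\mu}e^{\mathrm i\boldsymbol\mu\cdot\boldsymbol\phi}$. $\{F,G\}=\sum_i(\partial_{\phi_i}F\partial_{I_i}G-\partial_{I_i}F\partial_{\phi_i}G)$, $\mathrm{ad}^0_\chi G=G$, $\mathrm{ad}^s_\chi G=\{\mathrm{ad}^{s-1}_\chi G,\chi\}$. $f^{(0)}=\sum_{i=1}^{n-1}U_i(\phi_{i+1}-\phi_i)$; for $j\ge1$, $\chi^{(j-1)}=Qf^{(j-1)}$, $f^{(j)}=\sum_{\ell=1}^{k-1}\frac1{\ell!}\mathrm{ad}^\ell_{\chi^{(j-1)}}\big(\sum_{m=0}^{j-2}f^{(m),\mathrm R}+f^{(j-1)}-\frac{f^{(j-1),\mathrm{NR}}}{\ell+1}\big)$. *)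

theory Defs
  imports "HOL-Analysis.Analysis"
begin

text \<open>
  Points of phase space: actions I and angles phi, both indexed by 1..n and
  represented as functions nat => complex (only coordinates 1..n matter).
  Integer wave vectors mu are functions nat => int (only coordinates 1..n matter).

  A function with finitely many Fourier modes in phi is represented by its
  Fourier data: c mu I is the Fourier coefficient f_mu(I) of the mode e^(i mu.phi).
\<close>

type_synonym fdata = "(nat \<Rightarrow> int) \<Rightarrow> (nat \<Rightarrow> complex) \<Rightarrow> complex"

definition fsupp :: "fdata \<Rightarrow> (nat \<Rightarrow> int) set" where
  "fsupp c = {\<mu>. c \<mu> \<noteq> (\<lambda>_. 0)}"

definition mu_dot_phi :: "nat \<Rightarrow> (nat \<Rightarrow> int) \<Rightarrow> (nat \<Rightarrow> complex) \<Rightarrow> complex" where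
  "mu_dot_phi n \<mu> \<phi> = (\<Sum>i=1..n. of_int (\<mu> i) * \<phi> i)"

definition feval :: "nat \<Rightarrow> fdata \<Rightarrow> (nat \<Rightarrow> complex) \<Rightarrow> (nat \<Rightarrow> complex) \<Rightarrow> complex" where
  "feval n c I \<phi> = (\<Sum>\<mu>\<in>fsupp c. c \<mu> I * exp (\<i> * mu_dot_phi n \<mu> \<phi>))"

definition fzero :: fdata where "fzero = (\<lambda>\<mu> I. 0)"
definition fadd :: "fdata \<Rightarrow> fdata \<Rightarrow> fdata" where "fadd c d = (\<lambda>\<mu> I. c \<mu> I + d \<mu> I)"
definition fsub :: "fdata \<Rightarrow> fdata \<Rightarrow> fdata" where "fsub c d = (\<lambda>\<mu> I. c \<mu> I - d \<mu> I)"
definition fscale :: "complex \<Rightarrow> fdata \<Rightarrow> fdata" where "fscale a c = (\<lambda>\<mu> I. a * c \<mu> I)"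

definition fmult :: "fdata \<Rightarrow> fdata \<Rightarrow> fdata" where
  "fmult c d = (\<lambda>\<mu> I. \<Sum>\<nu>\<in>fsupp c. c \<nu> I * d (\<mu> - \<nu>) I)"

definition dphi :: "nat \<Rightarrow> fdata \<Rightarrow> fdata" where
  "dphi i c = (\<lambda>\<mu> I. \<i> * of_int (\<mu> i) * c \<mu> I)"

definition dI :: "nat \<Rightarrow> fdata \<Rightarrow> fdata" where
  "dI i c = (\<lambda>\<mu> I. deriv (\<lambda>z. c \<mu> (I(i := z))) (I i))"

definition pbracket :: "nat \<Rightarrow> fdata \<Rightarrow> fdata \<Rightarrow> fdata" where
  "pbracket n F G = (\<lambda>\<mu> I. \<Sum>i=1..n.
      fsub (fmult (dphi i F) (dI i G)) (fmult (dI i F) (dphi i G)) \<mu> I)"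

primrec adpow :: "nat \<Rightarrow> fdata \<Rightarrow> nat \<Rightarrow> fdata \<Rightarrow> fdata" where
  "adpow n ch 0 G = G"
| "adpow n ch (Suc s) G = pbracket n (adpow n ch s G) ch"

definition resp :: "nat \<Rightarrow> fdata \<Rightarrow> fdata" where
  "resp k c = (\<lambda>\<mu> I. if \<mu> k = 0 then c \<mu> I else 0)"

definition nresp :: "nat \<Rightarrow> fdata \<Rightarrow> fdata" where
  "nresp k c = (\<lambda>\<mu> I. if \<mu> k \<noteq> 0 then c \<mu> I else 0)"

definition Qop :: "nat \<Rightarrow> nat \<Rightarrow> fdata \<Rightarrow> fdata" where
  "Qop n k c = (\<lambda>\<mu> I. if \<mu> k \<noteq> 0
      then - \<i> * c \<mu> I / (\<Sum>i=1..n. I i * of_int (\<mu> i)) else 0)"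

definition Upot :: "(nat \<Rightarrow> int \<Rightarrow> complex) \<Rightarrow> nat \<Rightarrow> complex \<Rightarrow> complex" where
  "Upot u i x = (\<Sum>m\<in>{m. u i m \<noteq> 0}. u i m * exp (\<i> * of_int m * x))"

definition Upot' :: "(nat \<Rightarrow> int \<Rightarrow> complex) \<Rightarrow> nat \<Rightarrow> complex \<Rightarrow> complex" where
  "Upot' u i x = (\<Sum>m\<in>{m. u i m \<noteq> 0}. \<i> * of_int m * u i m * exp (\<i> * of_int m * x))"

definition Upot'' :: "(nat \<Rightarrow> int \<Rightarrow> complex) \<Rightarrow> nat \<Rightarrow> complex \<Rightarrow> complex" where
  "Upot'' u i x = (\<Sum>m\<in>{m. u i m \<noteq> 0}. (\<i> * of_int m)^2 * u i m * exp (\<i> * of_int m * x))"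

text \<open>Fourier data of f^(0) = sum_{i=1}^{n-1} U_i(phi_{i+1} - phi_i).\<close>
definition f0data :: "nat \<Rightarrow> (nat \<Rightarrow> int \<Rightarrow> complex) \<Rightarrow> fdata" where
  "f0data n u = (\<lambda>\<mu> I. \<Sum>i=1..n-1. \<Sum>m\<in>{m. u i m \<noteq> 0}.
      if \<mu> = (\<lambda>l. if l = i + 1 then m else if l = i then - m else 0) then u i m else 0)"

fun fseq :: "nat \<Rightarrow> nat \<Rightarrow> (nat \<Rightarrow> int \<Rightarrow> complex) \<Rightarrow> nat \<Rightarrow> fdata" where
  "fseq n k u 0 = f0data n u"
| "fseq n k u (Suc j) =
     (\<lambda>\<mu> I. \<Sum>l=1..k-1. fscale (1 / of_nat (fact l))
        (adpow n (Qop n k (fseq n k u j)) l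
          (fadd (\<lambda>\<nu> J. \<Sum>m<j. resp k (fseq n k u m) \<nu> J)
                (fsub (fseq n k u j) (fscale (1 / of_nat (l + 1)) (nresp k (fseq n k u j)))))) \<mu> I)"

definition Dom :: "nat \<Rightarrow> nat \<Rightarrow> real \<Rightarrow> real \<Rightarrow> real \<Rightarrow> ((nat \<Rightarrow> complex) \<times> (nat \<Rightarrow> complex)) set" where
  "Dom n k L r \<sigma> = {(I, \<phi>). \<forall>i\<in>{1..n}.
      cmod (I i - (if i = k then of_real L else 0)) < r * L \<and> \<bar>Im (\<phi> i)\<bar> < \<sigma>}"

text \<open>Holomorphy in the 2n complex variables (I_1..I_n, phi_1..phi_n) on a set:
  continuity plus holomorphy in each variable separately (equivalent to joint
  holomorphy on open sets by Osgood's lemma).\<close>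
definition holo_on :: "nat \<Rightarrow> ((nat \<Rightarrow> complex) \<Rightarrow> (nat \<Rightarrow> complex) \<Rightarrow> complex)
    \<Rightarrow> ((nat \<Rightarrow> complex) \<times> (nat \<Rightarrow> complex)) set \<Rightarrow> bool" where
  "holo_on n F D \<longleftrightarrow>
     (\<forall>(I, \<phi>)\<in>D. \<forall>\<epsilon>>0. \<exists>\<delta>>0. \<forall>I' \<phi>'.
        (\<forall>i\<in>{1..n}. cmod (I' i - I i) < \<delta> \<and> cmod (\<phi>' i - \<phi> i) < \<delta>) \<and>
        (\<forall>i. i \<notin> {1..n} \<longrightarrow> I' i = I i \<and> \<phi>' i = \<phi> i)
        \<longrightarrow> cmod (F I' \<phi>' - F I \<phi>) < \<epsilon>) \<and>
     (\<forall>(I, \<phi>)\<in>D. \<forall>i\<in>{1..n}.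
        (\<lambda>z. F (I(i := z)) \<phi>) field_differentiable (at (I i)) \<and>
        (\<lambda>z. F I (\<phi>(i := z))) field_differentiable (at (\<phi> i)))"

definition bigO_fin :: "nat \<Rightarrow> nat \<Rightarrow> ((nat \<Rightarrow> complex) \<Rightarrow> (nat \<Rightarrow> complex) \<Rightarrow> complex) \<Rightarrow> real \<Rightarrow> bool" where
  "bigO_fin n k F s \<longleftrightarrow>
     (\<exists>r \<sigma> L0 C. r > 0 \<and> \<sigma> > 0 \<and> L0 > 0 \<and> C > 0 \<and>
        (\<forall>L\<ge>L0. holo_on n F (Dom n k L r \<sigma>) \<and>
                 (\<forall>(I, \<phi>)\<in>Dom n k L r \<sigma>. cmod (F I \<phi>) \<le> C * L powr s)) \<and>
        (\<exists>M g. finite M \<and> (\<forall>L\<ge>L0. \<forall>(I, \<phi>)\<in>Dom n k L r \<sigma>.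
             F I \<phi> = (\<Sum>\<mu>\<in>M. g \<mu> I * exp (\<i> * mu_dot_phi n \<mu> \<phi>)))))"

end

theory Submission
  imports Defs
begin

definition dotI :: "nat \<Rightarrow> (nat \<Rightarrow> complex) \<Rightarrow> (nat \<Rightarrow> int) \<Rightarrow> complex" where
  "dotI n I \<nu> = (\<Sum>i=1..n. I i * of_int (\<nu> i))"

definition Ug :: "nat \<Rightarrow> (nat \<Rightarrow> int) set \<Rightarrow> (nat \<Rightarrow> complex) set" where
  "Ug n N = {I. \<forall>\<nu>\<in>N. dotI n I \<nu> \<noteq> 0}"

inductive alg :: "nat \<Rightarrow> (nat \<Rightarrow> int) set \<Rightarrow> nat \<Rightarrow> ((nat \<Rightarrow> complex) \<Rightarrow> complex) \<Rightarrow> bool"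
  for n N where
  cst: "alg n N 0 (\<lambda>I. c)"
| zero: "alg n N d (\<lambda>I. 0)"
| inv: "\<nu> \<in> N \<Longrightarrow> alg n N 1 (\<lambda>I. inverse (dotI n I \<nu>))"
| add: "alg n N d f \<Longrightarrow> alg n N d g \<Longrightarrow> alg n N d (\<lambda>I. f I + g I)"
| mul: "alg n N d f \<Longrightarrow> alg n N e g \<Longrightarrow> alg n N (d + e) (\<lambda>I. f I * g I)"
| weak: "alg n N d f \<Longrightarrow> e \<le> d \<Longrightarrow> alg n N e f"

lemma alg_cmul: "alg n N d f \<Longrightarrow> alg n N d (\<lambda>I. c * f I)"
  using alg.mul[OF alg.cst, of n N d f c] by simp

lemma alg_neg: "alg n N d f \<Longrightarrow> alg n N d (\<lambda>I. - f I)"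
  using alg_cmul[of n N d f "-1"] by simp

lemma alg_sub: "alg n N d f \<Longrightarrow> alg n N d g \<Longrightarrow> alg n N d (\<lambda>I. f I - g I)"
  using alg.add[OF _ alg_neg] by fastforce

lemma alg_sum: "finite A \<Longrightarrow> (\<And>x. x \<in> A \<Longrightarrow> alg n N d (f x)) \<Longrightarrow> alg n N d (\<lambda>I. \<Sum>x\<in>A. f x I)"
proof (induction A rule: finite_induct)
  case empty then show ?case by (simp add: alg.zero)
next
  case (insert x F) then show ?case by (simp add: alg.add)
qed

lemma alg_mono: "alg n N d f \<Longrightarrow> N \<subseteq> N' \<Longrightarrow> alg n N' d f"
  by (induction rule: alg.induct) (blast intro: alg.intros)+

lemma Ug_anti: "N \<subseteq> N' \<Longrightarrow> Ug n N' \<subseteq> Ug n N"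
  unfolding Ug_def by auto

lemma dotI_upd: "dotI n (I(i:=z)) \<nu> = dotI n I \<nu> + (if i \<in> {1..n} then (z - I i) * of_int (\<nu> i) else 0)"
proof (cases "i \<in> {1..n}")
  case True
  have "dotI n (I(i:=z)) \<nu> = (\<Sum>l=1..n. I l * of_int (\<nu> l) + (if l = i then (z - I i) * of_int (\<nu> i) else 0))"
    unfolding dotI_def by (intro sum.cong) (auto simp: algebra_simps)
  also have "\<dots> = dotI n I \<nu> + (z - I i) * of_int (\<nu> i)"
    using True by (simp add: sum.distrib dotI_def)
  finally show ?thesis using True by simp
next
  case False
  then show ?thesis unfolding dotI_def by (auto intro!: sum.cong)
qed

lemma dotI_deriv: "((\<lambda>z. dotI n (I(i:=z)) \<nu>) has_field_derivative (if i \<in> {1..n} then of_int (\<nu> i) else 0)) (at x)"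
  unfolding dotI_upd by (auto intro!: derivative_eq_intros)

lemma alg_deriv:
  assumes "alg n N d f"
  shows "\<exists>g. alg n N (Suc d) g \<and> (\<forall>I\<in>Ug n N. ((\<lambda>z. f (I(i:=z))) has_field_derivative g I) (at (I i)))"
  using assms
proof (induction rule: alg.induct)
  case (cst c) then show ?case by (intro exI[of _ "\<lambda>I. 0"]) (auto intro: alg.zero)
next
  case (zero d) then show ?case by (intro exI[of _ "\<lambda>I. 0"]) (auto intro: alg.zero)
next
  case (inv \<nu>)
  define c :: complex where "c = (if i \<in> {1..n} then of_int (\<nu> i) else 0)"
  have a: "alg n N (0 + (1 + 1)) (\<lambda>I. (- c) * (inverse (dotI n I \<nu>) * inverse (dotI n I \<nu>)))"
    by (intro alg.mul alg.cst alg.inv inv)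
  show ?case
  proof (intro exI conjI ballI)
    show "alg n N (Suc 1) (\<lambda>I. (- c) * (inverse (dotI n I \<nu>) * inverse (dotI n I \<nu>)))" using a by simp
  next
    fix I assume "I \<in> Ug n N"
    then have nz: "dotI n I \<nu> \<noteq> 0" using inv unfolding Ug_def by auto
    have "((\<lambda>z. inverse (dotI n (I(i:=z)) \<nu>)) has_field_derivative - (c * inverse ((dotI n (I(i:=I i)) \<nu>) ^ Suc (Suc 0)))) (at (I i))"
      by (rule DERIV_inverse_fun) (use nz dotI_deriv c_def in auto)
    then show "((\<lambda>z. inverse (dotI n (I(i:=z)) \<nu>)) has_field_derivative (- c) * (inverse (dotI n I \<nu>) * inverse (dotI n I \<nu>))) (at (I i))"
      by (simp add: power2_eq_square inverse_mult_distrib)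
  qed
next
  case (add d f g)
  then obtain f' g' where A: "alg n N (Suc d) f'" "alg n N (Suc d) g'"
    "\<forall>I\<in>Ug n N. ((\<lambda>z. f (I(i:=z))) has_field_derivative f' I) (at (I i))"
    "\<forall>I\<in>Ug n N. ((\<lambda>z. g (I(i:=z))) has_field_derivative g' I) (at (I i))" by blast
  have D: "\<forall>I\<in>Ug n N. ((\<lambda>z. f (I(i:=z)) + g (I(i:=z))) has_field_derivative f' I + g' I) (at (I i))"
    using A by (auto intro!: DERIV_add)
  have C: "alg n N (Suc d) (\<lambda>I. f' I + g' I)" by (rule alg.add[OF A(1) A(2)])
  show ?case
    apply (rule exI[of _ "\<lambda>I. f' I + g' I"])
    using C D by blast
next
  case (mul d f e g)
  then obtain f' g' where A: "alg n N (Suc d) f'" "alg n N (Suc e) g'"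
    "\<forall>I\<in>Ug n N. ((\<lambda>z. f (I(i:=z))) has_field_derivative f' I) (at (I i))"
    "\<forall>I\<in>Ug n N. ((\<lambda>z. g (I(i:=z))) has_field_derivative g' I) (at (I i))" by blast
  have m1: "alg n N (Suc (d + e)) (\<lambda>I. f' I * g I)"
    using alg.mul[OF A(1) mul.hyps(2)] by simp
  have m2: "alg n N (Suc (d + e)) (\<lambda>I. f I * g' I)"
    using alg.mul[OF mul.hyps(1) A(2)] by simp
  have "alg n N (Suc (d + e)) (\<lambda>I. f' I * g I + f I * g' I)"
    using alg.add[OF m1 m2] by simp
  moreover have "\<forall>I\<in>Ug n N. ((\<lambda>z. f (I(i:=z)) * g (I(i:=z))) has_field_derivative f' I * g I + f I * g' I) (at (I i))"
  proof
    fix I assume "I \<in> Ug n N"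
    then have d1: "((\<lambda>z. f (I(i:=z))) has_field_derivative f' I) (at (I i))"
      and d2: "((\<lambda>z. g (I(i:=z))) has_field_derivative g' I) (at (I i))" using A by auto
    have "((\<lambda>z. f (I(i:=z)) * g (I(i:=z))) has_field_derivative f' I * g (I(i:= I i)) + g' I * f (I(i:=I i))) (at (I i))"
      by (rule DERIV_mult[OF d1 d2])
    then show "((\<lambda>z. f (I(i:=z)) * g (I(i:=z))) has_field_derivative f' I * g I + f I * g' I) (at (I i))" by (simp add: mult.commute)
  qed
  ultimately show ?case by blast
next
  case (weak d f e)
  then obtain g where g1: "alg n N (Suc d) g" and g2: "\<forall>I\<in>Ug n N. ((\<lambda>z. f (I(i:=z))) has_field_derivative g I) (at (I i))" by blast
  have "alg n N (Suc e) g" using alg.weak[OF g1] weak.hyps(2) by simp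
  then show ?case using g2 by blast
qed

definition DomI :: "nat \<Rightarrow> nat \<Rightarrow> real \<Rightarrow> real \<Rightarrow> (nat \<Rightarrow> complex) set" where
  "DomI n k L r = {I. \<forall>i\<in>{1..n}. cmod (I i - (if i = k then of_real L else 0)) < r * L}"

definition rN :: "nat \<Rightarrow> (nat \<Rightarrow> int) set \<Rightarrow> real" where
  "rN n N = 1 / (2 * (1 + (\<Sum>\<nu>\<in>N. \<Sum>i=1..n. \<bar>real_of_int (\<nu> i)\<bar>)))"

definition goodN :: "nat \<Rightarrow> (nat \<Rightarrow> int) set \<Rightarrow> bool" where
  "goodN k N \<longleftrightarrow> finite N \<and> (\<forall>\<nu>\<in>N. \<nu> k \<noteq> 0)"

lemma rN_pos: "finite N \<Longrightarrow> rN n N > 0"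
  unfolding rN_def by (auto intro!: add_pos_nonneg sum_nonneg)

lemma rN_le: assumes "finite N" "\<nu> \<in> N"
  shows "rN n N * (\<Sum>i=1..n. \<bar>real_of_int (\<nu> i)\<bar>) \<le> 1/2"
proof -
  define T where "T = (\<Sum>\<nu>\<in>N. \<Sum>i=1..n. \<bar>real_of_int (\<nu> i)\<bar>)"
  have "(\<Sum>i=1..n. \<bar>real_of_int (\<nu> i)\<bar>) \<le> T"
    unfolding T_def using assms by (intro member_le_sum) (auto intro: sum_nonneg)
  moreover have "T \<ge> 0" unfolding T_def by (auto intro!: sum_nonneg)
  ultimately show ?thesis unfolding rN_def T_def[symmetric] by (simp add: field_simps)
qed

lemma dot_lower:
  assumes k: "k \<in> {1..n}" and nk: "\<nu> k \<noteq> 0" and L: "L > 0" and r: "r * (\<Sum>i=1..n. \<bar>real_of_int (\<nu> i)\<bar>) \<le> 1/2"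
    and r0: "r \<ge> 0" and I: "I \<in> DomI n k L r"
  shows "cmod (dotI n I \<nu>) \<ge> L / 2"
proof -
  define D where "D i = I i - (if i = k then of_real L else 0)" for i
  have "dotI n I \<nu> = (\<Sum>i=1..n. (if i = k then of_real L else 0) * of_int (\<nu> i)) + (\<Sum>i=1..n. D i * of_int (\<nu> i))"
    unfolding dotI_def D_def sum.distrib[symmetric] by (intro sum.cong) (auto simp: algebra_simps)
  also have "(\<Sum>i=1..n. (if i = k then of_real L else 0) * of_int (\<nu> i)) = (\<Sum>i=1..n. if i = k then of_real L * of_int (\<nu> k) else 0)"
    by (intro sum.cong) auto
  also have "\<dots> = of_real L * of_int (\<nu> k)"
    using k by simp
  finally have eq: "dotI n I \<nu> = of_real L * of_int (\<nu> k) + (\<Sum>i=1..n. D i * of_int (\<nu> i))" .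
  have "cmod (\<Sum>i=1..n. D i * of_int (\<nu> i)) \<le> (\<Sum>i=1..n. cmod (D i * of_int (\<nu> i)))"
    by (rule norm_sum)
  also have "\<dots> \<le> (\<Sum>i=1..n. r * L * \<bar>real_of_int (\<nu> i)\<bar>)"
  proof (intro sum_mono)
    fix i assume i: "i \<in> {1..n}"
    have "cmod (D i) < r * L" using I i unfolding DomI_def D_def by blast
    then have "cmod (D i) \<le> r * L" by simp
    then show "cmod (D i * of_int (\<nu> i)) \<le> r * L * \<bar>real_of_int (\<nu> i)\<bar>"
      by (simp add: norm_mult mult_right_mono)
  qed
  also have "\<dots> = L * (r * (\<Sum>i=1..n. \<bar>real_of_int (\<nu> i)\<bar>))"
    by (simp add: sum_distrib_left algebra_simps)
  also have "\<dots> \<le> L * (1/2)" using L r by (intro mult_left_mono) auto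
  finally have s: "cmod (\<Sum>i=1..n. D i * of_int (\<nu> i)) \<le> L / 2" by simp
  have "cmod (of_real L * of_int (\<nu> k) :: complex) = L * \<bar>real_of_int (\<nu> k)\<bar>"
    using L by (simp add: norm_mult)
  also have "\<dots> \<ge> L" using nk L by (simp add: mult_le_cancel_left1)
  finally have t: "cmod (of_real L * of_int (\<nu> k) :: complex) \<ge> L" .
  have "cmod (of_real L * of_int (\<nu> k) :: complex) \<le> cmod (dotI n I \<nu>) + cmod (\<Sum>i=1..n. D i * of_int (\<nu> i))"
    unfolding eq by (metis add_diff_cancel_right' norm_triangle_ineq4 add.commute)
  then show ?thesis using s t by linarith
qed

lemma alg_bound:
  assumes "alg n N d f" and g: "goodN k N" and k: "k \<in> {1..n}" and r: "0 \<le> r" "r \<le> rN n N"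
  shows "\<exists>K\<ge>0. \<forall>L\<ge>1. \<forall>I\<in>DomI n k L r. cmod (f I) \<le> K / L ^ d"
  using assms(1)
proof (induction rule: alg.induct)
  case (cst c) then show ?case by (intro exI[of _ "cmod c"]) auto
next
  case (zero d) then show ?case by (intro exI[of _ 0]) auto
next
  case (inv \<nu>)
  show ?case
  proof (intro exI[of _ 2] conjI allI impI ballI)
    fix L :: real and I assume L: "L \<ge> 1" and I: "I \<in> DomI n k L r"
    have fN: "finite N" using g unfolding goodN_def by auto
    have "r * (\<Sum>i=1..n. \<bar>real_of_int (\<nu> i)\<bar>) \<le> rN n N * (\<Sum>i=1..n. \<bar>real_of_int (\<nu> i)\<bar>)"
      using r by (intro mult_right_mono sum_nonneg) auto
    also have "\<dots> \<le> 1/2" using rN_le[OF fN inv] .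
    finally have "cmod (dotI n I \<nu>) \<ge> L / 2"
      using dot_lower[OF k _ _ _ r(1) I] g inv L unfolding goodN_def by auto
    then have c: "cmod (dotI n I \<nu>) \<ge> L / 2" .
    have "cmod (inverse (dotI n I \<nu>)) = inverse (cmod (dotI n I \<nu>))" by (rule norm_inverse)
    also have "\<dots> \<le> inverse (L / 2)" using c L by (intro le_imp_inverse_le) auto
    also have "\<dots> = 2 / L ^ 1" by simp
    finally show "cmod (inverse (dotI n I \<nu>)) \<le> 2 / L ^ 1" .
  qed simp
next
  case (add d f g)
  then obtain K1 K2 where "K1 \<ge> 0" "K2 \<ge> 0" "\<forall>L\<ge>1. \<forall>I\<in>DomI n k L r. cmod (f I) \<le> K1 / L ^ d"
    "\<forall>L\<ge>1. \<forall>I\<in>DomI n k L r. cmod (g I) \<le> K2 / L ^ d" by blast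
  then show ?case
    by (intro exI[of _ "K1 + K2"]) (auto simp: add_divide_distrib intro!: order.trans[OF norm_triangle_ineq] add_mono)
next
  case (mul d f e g)
  then obtain K1 K2 where A: "K1 \<ge> 0" "K2 \<ge> 0" "\<forall>L\<ge>1. \<forall>I\<in>DomI n k L r. cmod (f I) \<le> K1 / L ^ d"
    "\<forall>L\<ge>1. \<forall>I\<in>DomI n k L r. cmod (g I) \<le> K2 / L ^ e" by blast
  show ?case
  proof (intro exI[of _ "K1 * K2"] conjI allI impI ballI)
    fix L :: real and I assume L: "L \<ge> 1" and I: "I \<in> DomI n k L r"
    have "cmod (f I * g I) \<le> (K1 / L ^ d) * (K2 / L ^ e)"
      unfolding norm_mult using A L I by (intro mult_mono) auto
    then show "cmod (f I * g I) \<le> K1 * K2 / L ^ (d + e)" by (simp add: power_add)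
  qed (use A in auto)
next
  case (weak d f e)
  then obtain K where A: "K \<ge> 0" "\<forall>L\<ge>1. \<forall>I\<in>DomI n k L r. cmod (f I) \<le> K / L ^ d" by blast
  show ?case
  proof (intro exI[of _ K] conjI allI impI ballI)
    fix L :: real and I assume L: "L \<ge> 1" and I: "I \<in> DomI n k L r"
    have "K / L ^ d \<le> K / L ^ e"
      using A(1) L weak.hyps(2) by (intro divide_left_mono power_increasing) auto
    then show "cmod (f I) \<le> K / L ^ e" using A L I by force
  qed (use A in auto)
qed

definition nearP :: "nat \<Rightarrow> (nat \<Rightarrow> complex) \<Rightarrow> (nat \<Rightarrow> complex) \<Rightarrow> ((nat \<Rightarrow> complex) \<times> (nat \<Rightarrow> complex)) filter" where
  "nearP n I \<phi> = (INF \<delta>\<in>{0<..}. principal {p. \<forall>i\<in>{1..n}. cmod (fst p i - I i) < \<delta> \<and> cmod (snd p i - \<phi> i) < \<delta>})"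

lemma eventually_nearP:
  "eventually P (nearP n I \<phi>) \<longleftrightarrow> (\<exists>\<delta>>0. \<forall>p. (\<forall>i\<in>{1..n}. cmod (fst p i - I i) < \<delta> \<and> cmod (snd p i - \<phi> i) < \<delta>) \<longrightarrow> P p)"
  unfolding nearP_def
proof (subst eventually_INF_base)
  show "{0::real<..} \<noteq> {}" by auto
next
  fix a b :: real assume "a \<in> {0<..}" "b \<in> {0<..}"
  then show "\<exists>x\<in>{0<..}. principal {p. \<forall>i\<in>{1..n}. cmod (fst p i - I i) < x \<and> cmod (snd p i - \<phi> i) < x}
      \<le> inf (principal {p. \<forall>i\<in>{1..n}. cmod (fst p i - I i) < a \<and> cmod (snd p i - \<phi> i) < a})
            (principal {p. \<forall>i\<in>{1..n}. cmod (fst p i - I i) < b \<and> cmod (snd p i - \<phi> i) < b})"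
    by (intro bexI[of _ "min a b"]) auto
qed (auto simp: eventually_principal)

lemma tendsto_fstP: "i \<in> {1..n} \<Longrightarrow> ((\<lambda>p. fst p i) \<longlongrightarrow> I i) (nearP n I \<phi>)"
  unfolding tendsto_iff dist_norm eventually_nearP by blast

lemma tendsto_sndP: "i \<in> {1..n} \<Longrightarrow> ((\<lambda>p. snd p i) \<longlongrightarrow> \<phi> i) (nearP n I \<phi>)"
  unfolding tendsto_iff dist_norm eventually_nearP by blast

lemma tendsto_dotI: "((\<lambda>p. dotI n (fst p) \<nu>) \<longlongrightarrow> dotI n I \<nu>) (nearP n I \<phi>)"
  unfolding dotI_def by (intro tendsto_intros tendsto_fstP) auto

lemma alg_tendsto:
  assumes "alg n N d f" "I \<in> Ug n N"
  shows "((\<lambda>p. f (fst p)) \<longlongrightarrow> f I) (nearP n I \<phi>)"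
  using assms(1)
proof (induction rule: alg.induct)
  case (inv \<nu>)
  then have "dotI n I \<nu> \<noteq> 0" using assms(2) unfolding Ug_def by auto
  then show ?case by (intro tendsto_inverse tendsto_dotI)
qed (auto intro: tendsto_intros)

lemma ev_nearP_Ug: "finite N \<Longrightarrow> I \<in> Ug n N \<Longrightarrow> eventually (\<lambda>p. fst p \<in> Ug n N) (nearP n I \<phi>)"
  unfolding Ug_def
  by (auto intro!: eventually_ball_finite tendsto_imp_eventually_ne[OF tendsto_dotI])

lemma dotI_line_cont: "isCont (\<lambda>z. dotI n (I(i:=z)) \<nu>) x"
  using dotI_deriv DERIV_isCont by blast

lemma ev_line_Ug: assumes "finite N" "I \<in> Ug n N" shows "eventually (\<lambda>z. I(i:=z) \<in> Ug n N) (nhds (I i))"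
  unfolding Ug_def mem_Collect_eq
proof (intro eventually_ball_finite ballI assms(1))
  fix \<nu> assume "\<nu> \<in> N"
  then have nz: "dotI n (I(i:=I i)) \<nu> \<noteq> 0" using assms(2) unfolding Ug_def by simp
  have "((\<lambda>z. dotI n (I(i:=z)) \<nu>) \<longlongrightarrow> dotI n (I(i:=I i)) \<nu>) (nhds (I i))"
    using dotI_line_cont[where x="I i" and I=I and i=i and n=n and \<nu>=\<nu>] by (simp add: isCont_def tendsto_nhds_iff continuous_at)
  then show "eventually (\<lambda>z. dotI n (I(i:=z)) \<nu> \<noteq> 0) (nhds (I i))"
    by (rule tendsto_imp_eventually_ne[OF _ nz])
qed

lemma mdp_dot: "mu_dot_phi n \<mu> \<phi> = dotI n \<phi> \<mu>"
  unfolding mu_dot_phi_def dotI_def by (simp add: mult.commute)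

lemma Dom_sub:
  assumes g: "goodN k N" and k: "k \<in> {1..n}" and r: "0 \<le> r" "r \<le> rN n N" and L: "L \<ge> 1"
    and p: "(I, \<phi>) \<in> Dom n k L r \<sigma>"
  shows "I \<in> Ug n N" "I \<in> DomI n k L r" "\<forall>i\<in>{1..n}. \<bar>Im (\<phi> i)\<bar> < \<sigma>"
proof -
  show I: "I \<in> DomI n k L r" using p unfolding Dom_def DomI_def by auto
  show "\<forall>i\<in>{1..n}. \<bar>Im (\<phi> i)\<bar> < \<sigma>" using p unfolding Dom_def by auto
  have fN: "finite N" using g unfolding goodN_def by auto
  show "I \<in> Ug n N" unfolding Ug_def
  proof (intro CollectI ballI)
    fix \<nu> assume nu: "\<nu> \<in> N"
    have "r * (\<Sum>i=1..n. \<bar>real_of_int (\<nu> i)\<bar>) \<le> rN n N * (\<Sum>i=1..n. \<bar>real_of_int (\<nu> i)\<bar>)"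
      using r by (intro mult_right_mono sum_nonneg) auto
    also have "\<dots> \<le> 1/2" using rN_le[OF fN nu] .
    finally have "cmod (dotI n I \<nu>) \<ge> L / 2"
      using dot_lower[OF k _ _ _ r(1) I] g nu L unfolding goodN_def by auto
    then show "dotI n I \<nu> \<noteq> 0" using L by auto
  qed
qed

lemma exp_bound:
  assumes "\<forall>i\<in>{1..n}. \<bar>Im (\<phi> i)\<bar> < \<sigma>" "\<sigma> > 0"
  shows "cmod (exp (\<i> * mu_dot_phi n \<mu> \<phi>)) \<le> exp (\<sigma> * (\<Sum>i=1..n. \<bar>real_of_int (\<mu> i)\<bar>))"
proof -
  have "cmod (exp (\<i> * mu_dot_phi n \<mu> \<phi>)) = exp (- Im (mu_dot_phi n \<mu> \<phi>))"
    by (simp add: norm_exp_eq_Re)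
  also have "- Im (mu_dot_phi n \<mu> \<phi>) \<le> \<bar>Im (mu_dot_phi n \<mu> \<phi>)\<bar>" by simp
  also have "Im (mu_dot_phi n \<mu> \<phi>) = (\<Sum>i=1..n. real_of_int (\<mu> i) * Im (\<phi> i))"
    unfolding mu_dot_phi_def by (simp add: Im_sum)
  also have "\<bar>\<dots>\<bar> \<le> (\<Sum>i=1..n. \<bar>real_of_int (\<mu> i) * Im (\<phi> i)\<bar>)" by (rule sum_abs)
  also have "\<dots> \<le> (\<Sum>i=1..n. \<sigma> * \<bar>real_of_int (\<mu> i)\<bar>)"
  proof (intro sum_mono)
    fix i assume "i \<in> {1..n}"
    then have h: "\<bar>Im (\<phi> i)\<bar> \<le> \<sigma>" using assms by force
    show "\<bar>real_of_int (\<mu> i) * Im (\<phi> i)\<bar> \<le> \<sigma> * \<bar>real_of_int (\<mu> i)\<bar>"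
      using mult_right_mono[OF h, of "\<bar>real_of_int (\<mu> i)\<bar>"] by (simp add: abs_mult mult.commute)
  qed
  finally show ?thesis by (simp add: sum_distrib_left)
qed

lemma finish:
  fixes F :: "(nat \<Rightarrow> complex) \<Rightarrow> (nat \<Rightarrow> complex) \<Rightarrow> complex"
  assumes g: "goodN k N" and k: "k \<in> {1..n}" and S: "finite S"
    and alg: "\<forall>\<mu>\<in>S. alg n N d (h \<mu>)"
    and eq: "\<forall>I \<phi>. I \<in> Ug n N \<longrightarrow> F I \<phi> = (\<Sum>\<mu>\<in>S. h \<mu> I * exp (\<i> * mu_dot_phi n \<mu> \<phi>))"
  shows "bigO_fin n k F (- real d)"
proof -
  have fN: "finite N" using g unfolding goodN_def by auto
  define r where "r = rN n N"
  have r0: "r > 0" unfolding r_def using rN_pos[OF fN] .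
  have "\<forall>\<mu>\<in>S. \<exists>K\<ge>0. \<forall>L\<ge>1. \<forall>I\<in>DomI n k L r. cmod (h \<mu> I) \<le> K / L ^ d"
  proof
    fix \<mu> assume "\<mu> \<in> S"
    then have "alg n N d (h \<mu>)" using alg by blast
    then show "\<exists>K\<ge>0. \<forall>L\<ge>1. \<forall>I\<in>DomI n k L r. cmod (h \<mu> I) \<le> K / L ^ d"
      by (rule alg_bound[OF _ g k]) (use r0 in \<open>auto simp: r_def\<close>)
  qed
  from bchoice[OF this] obtain K where K: "\<forall>\<mu>\<in>S. K \<mu> \<ge> 0 \<and> (\<forall>L\<ge>1. \<forall>I\<in>DomI n k L r. cmod (h \<mu> I) \<le> K \<mu> / L ^ d)"
    by blast
  define C where "C = 1 + (\<Sum>\<mu>\<in>S. K \<mu> * exp (1 * (\<Sum>i=1..n. \<bar>real_of_int (\<mu> i)\<bar>)))"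
  have C0: "C > 0" unfolding C_def using K by (intro add_pos_nonneg sum_nonneg) auto
  have bound: "cmod (F I \<phi>) \<le> C * L powr (- real d)" if L: "L \<ge> 1" and p: "(I, \<phi>) \<in> Dom n k L r 1" for L I \<phi>
  proof -
    note D = Dom_sub[OF g k less_imp_le[OF r0] _ L p, unfolded r_def, simplified]
    have "cmod (F I \<phi>) = cmod (\<Sum>\<mu>\<in>S. h \<mu> I * exp (\<i> * mu_dot_phi n \<mu> \<phi>))" using eq D by auto
    also have "\<dots> \<le> (\<Sum>\<mu>\<in>S. cmod (h \<mu> I * exp (\<i> * mu_dot_phi n \<mu> \<phi>)))" by (rule norm_sum)
    also have "\<dots> \<le> (\<Sum>\<mu>\<in>S. K \<mu> / L ^ d * exp (1 * (\<Sum>i=1..n. \<bar>real_of_int (\<mu> i)\<bar>)))"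
    proof (intro sum_mono)
      fix \<mu> assume mu: "\<mu> \<in> S"
      have a: "cmod (h \<mu> I) \<le> K \<mu> / L ^ d" using K mu L D(2) unfolding r_def by auto
      have b: "cmod (exp (\<i> * mu_dot_phi n \<mu> \<phi>)) \<le> exp (1 * (\<Sum>i=1..n. \<bar>real_of_int (\<mu> i)\<bar>))"
        by (rule exp_bound) (use D in auto)
      show "cmod (h \<mu> I * exp (\<i> * mu_dot_phi n \<mu> \<phi>)) \<le> K \<mu> / L ^ d * exp (1 * (\<Sum>i=1..n. \<bar>real_of_int (\<mu> i)\<bar>))"
        unfolding norm_mult using K mu L by (intro mult_mono a b) auto
    qed
    also have "\<dots> = (C - 1) / L ^ d" unfolding C_def by (simp add: sum_divide_distrib algebra_simps)
    also have "\<dots> \<le> C / L ^ d" using L by (intro divide_right_mono) auto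
    also have "\<dots> = C * L powr (- real d)" using L by (simp add: powr_minus powr_realpow divide_inverse)
    finally show ?thesis .
  qed
  have holo: "holo_on n F (Dom n k L r 1)" if L: "L \<ge> 1" for L
  proof -
    have cont: "\<forall>\<epsilon>>0. \<exists>\<delta>>0. \<forall>I' \<phi>'. (\<forall>i\<in>{1..n}. cmod (I' i - I i) < \<delta> \<and> cmod (\<phi>' i - \<phi> i) < \<delta>) \<and>
        (\<forall>i. i \<notin> {1..n} \<longrightarrow> I' i = I i \<and> \<phi>' i = \<phi> i) \<longrightarrow> cmod (F I' \<phi>' - F I \<phi>) < \<epsilon>"
      if p: "(I, \<phi>) \<in> Dom n k L r 1" for I \<phi>
    proof (intro allI impI)
    note D = Dom_sub[OF g k less_imp_le[OF r0] _ L p, unfolded r_def, simplified]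
      fix \<epsilon> :: real assume e: "\<epsilon> > 0"
      have t: "((\<lambda>p. \<Sum>\<mu>\<in>S. h \<mu> (fst p) * exp (\<i> * mu_dot_phi n \<mu> (snd p))) \<longlongrightarrow>
              (\<Sum>\<mu>\<in>S. h \<mu> I * exp (\<i> * mu_dot_phi n \<mu> \<phi>))) (nearP n I \<phi>)"
      proof (intro tendsto_sum)
        fix \<mu> assume "\<mu> \<in> S"
        then have a: "((\<lambda>p. h \<mu> (fst p)) \<longlongrightarrow> h \<mu> I) (nearP n I \<phi>)"
          using alg alg_tendsto D(1) by blast
        have b: "((\<lambda>p. mu_dot_phi n \<mu> (snd p)) \<longlongrightarrow> mu_dot_phi n \<mu> \<phi>) (nearP n I \<phi>)"
          unfolding mu_dot_phi_def by (intro tendsto_intros tendsto_sndP) auto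
        show "((\<lambda>p. h \<mu> (fst p) * exp (\<i> * mu_dot_phi n \<mu> (snd p))) \<longlongrightarrow> h \<mu> I * exp (\<i> * mu_dot_phi n \<mu> \<phi>)) (nearP n I \<phi>)"
          by (intro tendsto_intros a b)
      qed
      have ev: "eventually (\<lambda>p. F (fst p) (snd p) = (\<Sum>\<mu>\<in>S. h \<mu> (fst p) * exp (\<i> * mu_dot_phi n \<mu> (snd p)))) (nearP n I \<phi>)"
        using ev_nearP_Ug[OF fN D(1)] by eventually_elim (use eq in auto)
      have FI: "F I \<phi> = (\<Sum>\<mu>\<in>S. h \<mu> I * exp (\<i> * mu_dot_phi n \<mu> \<phi>))"
        by (rule mp[OF spec[OF spec[OF eq, of I], of \<phi>] D(1)])
      have "((\<lambda>p. F (fst p) (snd p)) \<longlongrightarrow> F I \<phi>) (nearP n I \<phi>)"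
        unfolding tendsto_cong[OF ev] FI by (rule t)
      then have "\<forall>e>0. eventually (\<lambda>p. dist (F (fst p) (snd p)) (F I \<phi>) < e) (nearP n I \<phi>)"
        unfolding tendsto_iff .
      then have "eventually (\<lambda>p. dist (F (fst p) (snd p)) (F I \<phi>) < \<epsilon>) (nearP n I \<phi>)"
        using e by simp
      then obtain \<delta> where "\<delta> > 0" and \<delta>: "\<forall>p. (\<forall>i\<in>{1..n}. cmod (fst p i - I i) < \<delta> \<and> cmod (snd p i - \<phi> i) < \<delta>) \<longrightarrow>
          dist (F (fst p) (snd p)) (F I \<phi>) < \<epsilon>" unfolding eventually_nearP by blast
      show "\<exists>\<delta>>0. \<forall>I' \<phi>'. (\<forall>i\<in>{1..n}. cmod (I' i - I i) < \<delta> \<and> cmod (\<phi>' i - \<phi> i) < \<delta>) \<and>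
        (\<forall>i. i \<notin> {1..n} \<longrightarrow> I' i = I i \<and> \<phi>' i = \<phi> i) \<longrightarrow> cmod (F I' \<phi>' - F I \<phi>) < \<epsilon>"
      proof (intro exI[of _ \<delta>] conjI allI impI)
        show "\<delta> > 0" by fact
        fix I' \<phi>' assume a: "(\<forall>i\<in>{1..n}. cmod (I' i - I i) < \<delta> \<and> cmod (\<phi>' i - \<phi> i) < \<delta>) \<and>
          (\<forall>i. i \<notin> {1..n} \<longrightarrow> I' i = I i \<and> \<phi>' i = \<phi> i)"
        from a have a1: "\<forall>i\<in>{1..n}. cmod (I' i - I i) < \<delta> \<and> cmod (\<phi>' i - \<phi> i) < \<delta>" by (rule conjunct1)
        then have "\<forall>i\<in>{1..n}. cmod (fst (I', \<phi>') i - I i) < \<delta> \<and> cmod (snd (I', \<phi>') i - \<phi> i) < \<delta>"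
          unfolding fst_conv snd_conv .
        then have "dist (F (fst (I', \<phi>')) (snd (I', \<phi>'))) (F I \<phi>) < \<epsilon>"
          by (rule mp[OF spec[OF \<delta>, of "(I', \<phi>')"]])
        then show "cmod (F I' \<phi>' - F I \<phi>) < \<epsilon>" by (simp only: fst_conv snd_conv dist_norm)
      qed
    qed
    have dI: "(\<lambda>z. F (I(i:=z)) \<phi>) field_differentiable (at (I i))"
      if p: "(I, \<phi>) \<in> Dom n k L r 1" and i: "i \<in> {1..n}" for I \<phi> i
    proof -
      note D = Dom_sub[OF g k less_imp_le[OF r0] _ L p, unfolded r_def, simplified]
      have "\<forall>\<mu>\<in>S. \<exists>g. (\<forall>I\<in>Ug n N. ((\<lambda>z. h \<mu> (I(i:=z))) has_field_derivative g I) (at (I i)))"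
      proof
        fix \<mu> assume "\<mu> \<in> S"
        then have "alg n N d (h \<mu>)" using alg by blast
        from alg_deriv[OF this, of i] show "\<exists>g. (\<forall>I\<in>Ug n N. ((\<lambda>z. h \<mu> (I(i:=z))) has_field_derivative g I) (at (I i)))"
          by blast
      qed
      from bchoice[OF this] obtain g0 where g0: "\<forall>\<mu>\<in>S. \<forall>I\<in>Ug n N. ((\<lambda>z. h \<mu> (I(i:=z))) has_field_derivative g0 \<mu> I) (at (I i))"
        by blast
      define g where "g \<mu> = g0 \<mu> I" for \<mu>
      have g: "\<forall>\<mu>\<in>S. ((\<lambda>z. h \<mu> (I(i:=z))) has_field_derivative g \<mu>) (at (I i))"
        unfolding g_def using g0 D(1) by blast
      have d: "((\<lambda>z. \<Sum>\<mu>\<in>S. h \<mu> (I(i:=z)) * exp (\<i> * mu_dot_phi n \<mu> \<phi>)) has_field_derivative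
                 (\<Sum>\<mu>\<in>S. g \<mu> * exp (\<i> * mu_dot_phi n \<mu> \<phi>))) (at (I i))"
        using g by (intro DERIV_sum DERIV_cmult_right) auto
      have ev: "eventually (\<lambda>z. F (I(i:=z)) \<phi> = (\<Sum>\<mu>\<in>S. h \<mu> (I(i:=z)) * exp (\<i> * mu_dot_phi n \<mu> \<phi>))) (nhds (I i))"
        using ev_line_Ug[OF fN D(1), of i] by eventually_elim (use eq in auto)
      have "((\<lambda>z. F (I(i:=z)) \<phi>) has_field_derivative (\<Sum>\<mu>\<in>S. g \<mu> * exp (\<i> * mu_dot_phi n \<mu> \<phi>))) (at (I i))"
        using DERIV_cong_ev[OF refl ev refl] d by blast
      then show ?thesis unfolding field_differentiable_def by blast
    qed
    have dP: "(\<lambda>z. F I (\<phi>(i:=z))) field_differentiable (at (\<phi> i))"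
      if p: "(I, \<phi>) \<in> Dom n k L r 1" and i: "i \<in> {1..n}" for I \<phi> i
    proof -
      note D = Dom_sub[OF g k less_imp_le[OF r0] _ L p, unfolded r_def, simplified]
      have d2: "((\<lambda>z. \<Sum>\<mu>\<in>S. h \<mu> I * exp (\<i> * dotI n (\<phi>(i:=z)) \<mu>)) has_field_derivative
         (\<Sum>\<mu>\<in>S. h \<mu> I * (exp (\<i> * dotI n (\<phi>(i:=\<phi> i)) \<mu>) * (\<i> * (if i \<in> {1..n} then of_int (\<mu> i) else 0))))) (at (\<phi> i))"
        by (intro DERIV_sum DERIV_cmult DERIV_exp[THEN DERIV_chain2] DERIV_cmult dotI_deriv)
      have "F I (\<phi>(i:=z)) = (\<Sum>\<mu>\<in>S. h \<mu> I * exp (\<i> * dotI n (\<phi>(i:=z)) \<mu>))" for z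
        using eq D by (auto simp: mdp_dot)
      then show ?thesis
        using d2 unfolding field_differentiable_def by auto
    qed
    show ?thesis
    proof (unfold holo_on_def, intro conjI ballI, goal_cases)
      case (1 p)
      obtain I \<phi> where pe: "p = (I, \<phi>)" by (cases p)
      show ?case unfolding pe case_prod_conv using cont 1 pe by simp
    next
      case (2 p)
      obtain I \<phi> where pe: "p = (I, \<phi>)" by (cases p)
      show ?case unfolding pe case_prod_conv using dI dP 2 pe by simp
    qed
  qed
  have A: "\<forall>L\<ge>1. holo_on n F (Dom n k L r 1) \<and> (\<forall>(I, \<phi>)\<in>Dom n k L r 1. cmod (F I \<phi>) \<le> C * L powr (- real d))"
  proof (intro allI impI conjI ballI)
    fix L :: real assume "1 \<le> L"
    then show "holo_on n F (Dom n k L r 1)" by (rule holo)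
  next
    fix L :: real and x assume L: "1 \<le> L" and x: "x \<in> Dom n k L r 1"
    obtain I \<phi> where pe: "x = (I, \<phi>)" by (cases x)
    show "case x of (I, \<phi>) \<Rightarrow> cmod (F I \<phi>) \<le> C * L powr - real d"
      unfolding pe case_prod_conv by (rule bound[OF L x[unfolded pe]])
  qed
  have B: "\<exists>M g. finite M \<and> (\<forall>L\<ge>1. \<forall>(I, \<phi>)\<in>Dom n k L r 1. F I \<phi> = (\<Sum>\<mu>\<in>M. g \<mu> I * exp (\<i> * mu_dot_phi n \<mu> \<phi>)))"
  proof (intro exI[of _ S] exI[of _ h] conjI S allI impI ballI)
    fix L :: real and x assume L: "1 \<le> L" and p: "x \<in> Dom n k L r 1"
    obtain I \<phi> where pe: "x = (I, \<phi>)" by (cases x)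
    note D = Dom_sub[OF g k less_imp_le[OF r0] _ L p[unfolded pe], unfolded r_def, simplified]
    show "case x of (I, \<phi>) \<Rightarrow> F I \<phi> = (\<Sum>\<mu>\<in>S. h \<mu> I * exp (\<i> * mu_dot_phi n \<mu> \<phi>))"
      unfolding pe case_prod_conv by (rule mp[OF spec[OF spec[OF eq, of I], of \<phi>] D(1)])
  qed
  show ?thesis unfolding bigO_fin_def
    apply (rule exI[of _ r], rule exI[of _ 1], rule exI[of _ 1], rule exI[of _ C])
    by (intro conjI r0 C0 A B zero_less_one)
qed

definition rep :: "nat \<Rightarrow> (nat \<Rightarrow> int) set \<Rightarrow> nat \<Rightarrow> fdata \<Rightarrow> bool" where
  "rep n N d c \<longleftrightarrow> finite (fsupp c) \<and> (\<forall>\<mu>. \<exists>f. alg n N d f \<and> (\<forall>I\<in>Ug n N. c \<mu> I = f I))"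

definition eqv :: "nat \<Rightarrow> (nat \<Rightarrow> int) set \<Rightarrow> fdata \<Rightarrow> fdata \<Rightarrow> bool" where
  "eqv n N c d \<longleftrightarrow> (\<forall>\<mu>. \<forall>I\<in>Ug n N. c \<mu> I = d \<mu> I)"

lemma not_fsupp: "\<mu> \<notin> fsupp c \<longleftrightarrow> c \<mu> = (\<lambda>_. 0)"
  unfolding fsupp_def by auto

lemma not_fsupp_val: "\<mu> \<notin> fsupp c \<Longrightarrow> c \<mu> I = 0"
  unfolding fsupp_def by auto

lemma in_fsupp: "c \<mu> I \<noteq> 0 \<Longrightarrow> \<mu> \<in> fsupp c"
  unfolding fsupp_def by (auto simp: fun_eq_iff)

lemma fsupp_subI: "(\<And>\<mu> I. c \<mu> I \<noteq> 0 \<Longrightarrow> \<mu> \<in> S) \<Longrightarrow> fsupp c \<subseteq> S"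
  unfolding fsupp_def by (auto simp: fun_eq_iff)

lemma fmult_sup: "finite S \<Longrightarrow> fsupp c \<subseteq> S \<Longrightarrow> fmult c d \<mu> I = (\<Sum>\<nu>\<in>S. c \<nu> I * d (\<mu> - \<nu>) I)"
  unfolding fmult_def by (rule sum.mono_neutral_left) (auto simp: not_fsupp_val intro: in_fsupp)

lemma feval_sup: "finite S \<Longrightarrow> fsupp c \<subseteq> S \<Longrightarrow> feval n c I \<phi> = (\<Sum>\<mu>\<in>S. c \<mu> I * exp (\<i> * mu_dot_phi n \<mu> \<phi>))"
  unfolding feval_def by (rule sum.mono_neutral_left) (auto simp: not_fsupp_val intro: in_fsupp)

lemma rep_fin: "rep n N d c \<Longrightarrow> finite (fsupp c)"
  unfolding rep_def by auto

lemma rep_alg: "rep n N d c \<Longrightarrow> \<exists>f. alg n N d f \<and> (\<forall>I\<in>Ug n N. c \<mu> I = f I)"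
  unfolding rep_def by auto

lemma rep_choice: assumes "rep n N d c"
  obtains F where "\<And>\<mu>. alg n N d (F \<mu>)" "\<And>\<mu> I. I \<in> Ug n N \<Longrightarrow> c \<mu> I = F \<mu> I"
proof -
  have "\<forall>\<mu>. \<exists>f. alg n N d f \<and> (\<forall>I\<in>Ug n N. c \<mu> I = f I)" using assms unfolding rep_def by auto
  from choice[OF this] obtain F where "\<forall>\<mu>. alg n N d (F \<mu>) \<and> (\<forall>I\<in>Ug n N. c \<mu> I = F \<mu> I)" by blast
  then show ?thesis using that by blast
qed

lemma repI:
  assumes "finite S" "\<And>\<mu> I. c \<mu> I \<noteq> 0 \<Longrightarrow> \<mu> \<in> S" "\<And>\<mu>. \<exists>f. alg n N d f \<and> (\<forall>I\<in>Ug n N. c \<mu> I = f I)"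
  shows "rep n N d c"
proof -
  have "fsupp c \<subseteq> S" using assms(2) by (rule fsupp_subI)
  then have "finite (fsupp c)" using assms(1) by (rule finite_subset)
  then show ?thesis unfolding rep_def using assms(3) by blast
qed

lemma rep_mono: assumes "rep n N d c" "N \<subseteq> N'" shows "rep n N' d c"
  unfolding rep_def
proof (intro conjI allI)
  show "finite (fsupp c)" using rep_fin[OF assms(1)] .
  fix \<mu>
  obtain f where f: "alg n N d f" "\<forall>I\<in>Ug n N. c \<mu> I = f I" using rep_alg[OF assms(1)] by blast
  have "alg n N' d f" using alg_mono[OF f(1) assms(2)] .
  moreover have "\<forall>I\<in>Ug n N'. c \<mu> I = f I" using f(2) Ug_anti[OF assms(2)] by blast
  ultimately show "\<exists>f. alg n N' d f \<and> (\<forall>I\<in>Ug n N'. c \<mu> I = f I)" by blast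
qed

lemma rep_weak: assumes "rep n N d c" "e \<le> d" shows "rep n N e c"
  unfolding rep_def
proof (intro conjI allI)
  show "finite (fsupp c)" using rep_fin[OF assms(1)] .
  fix \<mu>
  obtain f where f: "alg n N d f" "\<forall>I\<in>Ug n N. c \<mu> I = f I" using rep_alg[OF assms(1)] by blast
  have "alg n N e f" using alg.weak[OF f(1) assms(2)] .
  then show "\<exists>f. alg n N e f \<and> (\<forall>I\<in>Ug n N. c \<mu> I = f I)" using f(2) by blast
qed

lemma rep_add: assumes "rep n N d c" "rep n N d c'" shows "rep n N d (fadd c c')"
proof (rule repI)
  show "finite (fsupp c \<union> fsupp c')" using assms rep_fin by blast
  show "fadd c c' \<mu> I \<noteq> 0 \<Longrightarrow> \<mu> \<in> fsupp c \<union> fsupp c'" for \<mu> I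
    unfolding fadd_def by (auto simp: not_fsupp_val intro: in_fsupp)
  fix \<mu>
  obtain f where f: "alg n N d f" "\<forall>I\<in>Ug n N. c \<mu> I = f I" using rep_alg[OF assms(1)] by blast
  obtain g where g: "alg n N d g" "\<forall>I\<in>Ug n N. c' \<mu> I = g I" using rep_alg[OF assms(2)] by blast
  show "\<exists>h. alg n N d h \<and> (\<forall>I\<in>Ug n N. fadd c c' \<mu> I = h I)"
    using f g by (intro exI[of _ "\<lambda>I. f I + g I"]) (auto simp: fadd_def intro: alg.add)
qed

lemma rep_sub: assumes "rep n N d c" "rep n N d c'" shows "rep n N d (fsub c c')"
proof (rule repI)
  show "finite (fsupp c \<union> fsupp c')" using assms rep_fin by blast
  show "fsub c c' \<mu> I \<noteq> 0 \<Longrightarrow> \<mu> \<in> fsupp c \<union> fsupp c'" for \<mu> I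
    unfolding fsub_def by (auto simp: not_fsupp_val intro: in_fsupp)
  fix \<mu>
  obtain f where f: "alg n N d f" "\<forall>I\<in>Ug n N. c \<mu> I = f I" using rep_alg[OF assms(1)] by blast
  obtain g where g: "alg n N d g" "\<forall>I\<in>Ug n N. c' \<mu> I = g I" using rep_alg[OF assms(2)] by blast
  show "\<exists>h. alg n N d h \<and> (\<forall>I\<in>Ug n N. fsub c c' \<mu> I = h I)"
    using f g by (intro exI[of _ "\<lambda>I. f I - g I"]) (auto simp: fsub_def intro: alg_sub)
qed

lemma rep_scale: assumes "rep n N d c" shows "rep n N d (fscale a c)"
proof (rule repI)
  show "finite (fsupp c)" using assms rep_fin by blast
  show "fscale a c \<mu> I \<noteq> 0 \<Longrightarrow> \<mu> \<in> fsupp c" for \<mu> I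
    unfolding fscale_def by (auto simp: not_fsupp_val intro: in_fsupp)
  fix \<mu>
  obtain f where f: "alg n N d f" "\<forall>I\<in>Ug n N. c \<mu> I = f I" using rep_alg[OF assms(1)] by blast
  show "\<exists>h. alg n N d h \<and> (\<forall>I\<in>Ug n N. fscale a c \<mu> I = h I)"
    using f by (intro exI[of _ "\<lambda>I. a * f I"]) (auto simp: fscale_def intro: alg_cmul)
qed

lemma rep_cmulfun: assumes "rep n N d c" shows "rep n N d (\<lambda>\<mu> I. w \<mu> * c \<mu> I)"
proof (rule repI)
  show "finite (fsupp c)" using assms rep_fin by blast
  show "w \<mu> * c \<mu> I \<noteq> 0 \<Longrightarrow> \<mu> \<in> fsupp c" for \<mu> I
    by (auto simp: not_fsupp_val intro: in_fsupp)
  fix \<mu>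
  obtain f where f: "alg n N d f" "\<forall>I\<in>Ug n N. c \<mu> I = f I" using rep_alg[OF assms(1)] by blast
  show "\<exists>h. alg n N d h \<and> (\<forall>I\<in>Ug n N. w \<mu> * c \<mu> I = h I)"
    using f by (intro exI[of _ "\<lambda>I. w \<mu> * f I"]) (auto intro: alg_cmul)
qed

lemma rep_dphi: "rep n N d c \<Longrightarrow> rep n N d (dphi i c)"
  unfolding dphi_def using rep_cmulfun[of n N d c "\<lambda>\<mu>. \<i> * of_int (\<mu> i)"] by simp

lemma resp_alt: "resp k c = (\<lambda>\<mu> I. (if \<mu> k = 0 then 1 else 0) * c \<mu> I)"
  unfolding resp_def by (intro ext) simp

lemma nresp_alt: "nresp k c = (\<lambda>\<mu> I. (if \<mu> k \<noteq> 0 then 1 else 0) * c \<mu> I)"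
  unfolding nresp_def by (intro ext) simp

lemma rep_resp: "rep n N d c \<Longrightarrow> rep n N d (resp k c)"
  unfolding resp_alt by (rule rep_cmulfun)

lemma rep_nresp: "rep n N d c \<Longrightarrow> rep n N d (nresp k c)"
  unfolding nresp_alt by (rule rep_cmulfun)

lemma rep_sum: assumes "finite A" "\<And>l. l \<in> A \<Longrightarrow> rep n N d (c l)"
  shows "rep n N d (\<lambda>\<mu> I. \<Sum>l\<in>A. c l \<mu> I)"
proof (rule repI)
  show "finite (\<Union>l\<in>A. fsupp (c l))" using assms rep_fin by blast
  show "(\<Sum>l\<in>A. c l \<mu> I) \<noteq> 0 \<Longrightarrow> \<mu> \<in> (\<Union>l\<in>A. fsupp (c l))" for \<mu> I
  proof (rule ccontr)
    assume "\<mu> \<notin> (\<Union>l\<in>A. fsupp (c l))" "(\<Sum>l\<in>A. c l \<mu> I) \<noteq> 0"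
    then show False by (auto simp: not_fsupp_val intro: in_fsupp)
  qed
  fix \<mu>
  have "\<forall>l\<in>A. \<exists>f. alg n N d f \<and> (\<forall>I\<in>Ug n N. c l \<mu> I = f I)" using assms rep_alg by blast
  from bchoice[OF this] obtain F where F: "\<forall>l\<in>A. alg n N d (F l) \<and> (\<forall>I\<in>Ug n N. c l \<mu> I = F l I)" by blast
  show "\<exists>h. alg n N d h \<and> (\<forall>I\<in>Ug n N. (\<Sum>l\<in>A. c l \<mu> I) = h I)"
    using F assms(1) by (intro exI[of _ "\<lambda>I. \<Sum>l\<in>A. F l I"]) (auto intro!: alg_sum sum.cong)
qed

lemma fsupp_fmult: "finite (fsupp c) \<Longrightarrow> fsupp (fmult c d) \<subseteq> (\<lambda>(a, b). (\<lambda>l. a l + b l)) ` (fsupp c \<times> fsupp d)"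
proof (rule fsupp_subI)
  fix \<mu> I assume "finite (fsupp c)" and nz: "fmult c d \<mu> I \<noteq> 0"
  from nz obtain \<nu> where "\<nu> \<in> fsupp c" "c \<nu> I * d (\<mu> - \<nu>) I \<noteq> 0"
    unfolding fmult_def by (rule sum.not_neutral_contains_not_neutral)
  then have "\<mu> - \<nu> \<in> fsupp d" by (auto simp: not_fsupp_val intro: in_fsupp)
  then show "\<mu> \<in> (\<lambda>(a, b). (\<lambda>l. a l + b l)) ` (fsupp c \<times> fsupp d)"
    using \<open>\<nu> \<in> fsupp c\<close> by (intro image_eqI[of _ _ "(\<nu>, \<mu> - \<nu>)"]) (auto simp: fun_diff_def)
qed

lemma fin_fmult: "finite (fsupp c) \<Longrightarrow> finite (fsupp d) \<Longrightarrow> finite (fsupp (fmult c d))"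
  using fsupp_fmult finite_subset by blast

lemma rep_fmult: assumes "rep n N d c" "rep n N e c'" shows "rep n N (d + e) (fmult c c')"
proof -
  obtain F where F: "\<And>\<mu>. alg n N d (F \<mu>)" "\<And>\<mu> I. I \<in> Ug n N \<Longrightarrow> c \<mu> I = F \<mu> I" using rep_choice[OF assms(1)] by blast
  obtain G where G: "\<And>\<mu>. alg n N e (G \<mu>)" "\<And>\<mu> I. I \<in> Ug n N \<Longrightarrow> c' \<mu> I = G \<mu> I" using rep_choice[OF assms(2)] by blast
  have fc: "finite (fsupp c)" using assms rep_fin by blast
  show ?thesis unfolding rep_def
  proof (intro conjI allI)
    show "finite (fsupp (fmult c c'))" using fin_fmult assms rep_fin by blast
    fix \<mu>
    show "\<exists>f. alg n N (d + e) f \<and> (\<forall>I\<in>Ug n N. fmult c c' \<mu> I = f I)"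
      using fc F G by (intro exI[of _ "\<lambda>I. \<Sum>\<nu>\<in>fsupp c. F \<nu> I * G (\<mu> - \<nu>) I"])
        (auto simp: fmult_def intro!: alg_sum alg.mul sum.cong)
  qed
qed

lemma deriv_zero_fun: "deriv (\<lambda>z. 0) x = (0::complex)"
  by (rule DERIV_imp_deriv) simp

lemma dI_fsupp: "fsupp (dI i c) \<subseteq> fsupp c"
proof (rule fsupp_subI)
  fix \<mu> I assume nz: "dI i c \<mu> I \<noteq> 0"
  show "\<mu> \<in> fsupp c"
  proof (rule ccontr)
    assume "\<mu> \<notin> fsupp c"
    then have "c \<mu> = (\<lambda>_. 0)" by (simp add: not_fsupp)
    then have "dI i c \<mu> I = 0" unfolding dI_def by (simp add: deriv_zero_fun)
    then show False using nz by simp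
  qed
qed

lemma rep_DERIV:
  assumes "finite N" "rep n N d c" "I \<in> Ug n N"
  shows "\<exists>g. alg n N (Suc d) g \<and> (\<forall>I\<in>Ug n N. ((\<lambda>z. c \<mu> (I(i:=z))) has_field_derivative g I) (at (I i)))"
proof -
  obtain f where f: "alg n N d f" "\<forall>I\<in>Ug n N. c \<mu> I = f I" using rep_alg[OF assms(2)] by blast
  obtain g where g: "alg n N (Suc d) g" "\<forall>I\<in>Ug n N. ((\<lambda>z. f (I(i:=z))) has_field_derivative g I) (at (I i))"
    using alg_deriv[OF f(1)] by blast
  have "((\<lambda>z. c \<mu> (I(i:=z))) has_field_derivative g I) (at (I i))" if I: "I \<in> Ug n N" for I
  proof -
    have ev: "eventually (\<lambda>z. c \<mu> (I(i:=z)) = f (I(i:=z))) (nhds (I i))"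
      using ev_line_Ug[OF assms(1) I, of i] by eventually_elim (use f in auto)
    show ?thesis using DERIV_cong_ev[OF refl ev refl] g I by blast
  qed
  then show ?thesis using g by blast
qed

lemma rep_dI_DERIV:
  assumes "finite N" "rep n N d c" "I \<in> Ug n N"
  shows "((\<lambda>z. c \<mu> (I(i:=z))) has_field_derivative dI i c \<mu> I) (at (I i))"
proof -
  obtain g where "\<forall>I\<in>Ug n N. ((\<lambda>z. c \<mu> (I(i:=z))) has_field_derivative g I) (at (I i))"
    using rep_DERIV[OF assms] by blast
  then have "((\<lambda>z. c \<mu> (I(i:=z))) has_field_derivative g I) (at (I i))" using assms(3) by blast
  moreover then have "dI i c \<mu> I = g I" unfolding dI_def by (rule DERIV_imp_deriv)
  ultimately show ?thesis by simp
qed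

lemma rep_dI: assumes "finite N" "rep n N d c" shows "rep n N (Suc d) (dI i c)"
  unfolding rep_def
proof (intro conjI allI)
  show "finite (fsupp (dI i c))" using dI_fsupp rep_fin[OF assms(2)] finite_subset by blast
  fix \<mu>
  obtain I0 where "True" by simp
  obtain g where g: "alg n N (Suc d) g" "\<forall>I\<in>Ug n N. ((\<lambda>z. c \<mu> (I(i:=z))) has_field_derivative g I) (at (I i))"
  proof -
    obtain f where f: "alg n N d f" "\<forall>I\<in>Ug n N. c \<mu> I = f I" using rep_alg[OF assms(2)] by blast
    obtain g where g: "alg n N (Suc d) g" "\<forall>I\<in>Ug n N. ((\<lambda>z. f (I(i:=z))) has_field_derivative g I) (at (I i))"
      using alg_deriv[OF f(1)] by blast
    have "((\<lambda>z. c \<mu> (I(i:=z))) has_field_derivative g I) (at (I i))" if I: "I \<in> Ug n N" for I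
    proof -
      have ev: "eventually (\<lambda>z. c \<mu> (I(i:=z)) = f (I(i:=z))) (nhds (I i))"
        using ev_line_Ug[OF assms(1) I, of i] by eventually_elim (use f in auto)
      show ?thesis using DERIV_cong_ev[OF refl ev refl] g I by blast
    qed
    then show ?thesis using that g by blast
  qed
  show "\<exists>f. alg n N (Suc d) f \<and> (\<forall>I\<in>Ug n N. dI i c \<mu> I = f I)"
    using g unfolding dI_def by (intro exI[of _ g]) (auto intro: DERIV_imp_deriv)
qed

lemma rep_Qop:
  assumes "rep n N d c" "\<forall>\<mu>\<in>fsupp c. \<mu> k \<noteq> 0 \<longrightarrow> \<mu> \<in> N"
  shows "rep n N (Suc d) (Qop n k c)"
proof (rule repI)
  show "finite (fsupp c)" using assms rep_fin by blast
  show "Qop n k c \<mu> I \<noteq> 0 \<Longrightarrow> \<mu> \<in> fsupp c" for \<mu> I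
    unfolding Qop_def by (auto simp: not_fsupp_val intro: in_fsupp split: if_splits)
  fix \<mu>
  obtain f where f: "alg n N d f" "\<forall>I\<in>Ug n N. c \<mu> I = f I" using rep_alg[OF assms(1)] by blast
  show "\<exists>h. alg n N (Suc d) h \<and> (\<forall>I\<in>Ug n N. Qop n k c \<mu> I = h I)"
  proof (cases "\<mu> k \<noteq> 0 \<and> \<mu> \<in> fsupp c")
    case True
    then have mN: "\<mu> \<in> N" using assms(2) by blast
    have "alg n N (0 + (d + 1)) (\<lambda>I. (- \<i>) * (f I * inverse (dotI n I \<mu>)))"
      by (intro alg.mul alg.cst f(1) alg.inv mN)
    then show ?thesis using True f(2)
      by (intro exI[of _ "\<lambda>I. (- \<i>) * (f I * inverse (dotI n I \<mu>))"])
        (auto simp: Qop_def dotI_def divide_inverse)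
  next
    case False
    then show ?thesis
      by (intro exI[of _ "\<lambda>I. 0"]) (auto simp: Qop_def not_fsupp_val intro: alg.zero)
  qed
qed

lemma rep_pbracket:
  assumes "finite N" "rep n N d F" "rep n N e G"
  shows "rep n N (Suc (d + e)) (pbracket n F G)"
  unfolding pbracket_def
proof (rule rep_sum)
  fix i
  have a: "rep n N (d + Suc e) (fmult (dphi i F) (dI i G))"
    by (intro rep_fmult rep_dphi rep_dI assms)
  have b: "rep n N (Suc d + e) (fmult (dI i F) (dphi i G))"
    by (intro rep_fmult rep_dphi rep_dI assms)
  have a': "rep n N (Suc (d + e)) (fmult (dphi i F) (dI i G))" using a by simp
  have b': "rep n N (Suc (d + e)) (fmult (dI i F) (dphi i G))" using b by simp
  show "rep n N (Suc (d + e)) (fsub (fmult (dphi i F) (dI i G)) (fmult (dI i F) (dphi i G)))"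
    using rep_sub[OF a' b'] .
qed simp

lemma rep_adpow:
  assumes "finite N" "rep n N d G" "rep n N e ch"
  shows "rep n N (d + s * Suc e) (adpow n ch s G)"
proof (induction s)
  case 0 then show ?case using assms by simp
next
  case (Suc s)
  have "rep n N (Suc ((d + s * Suc e) + e)) (adpow n ch (Suc s) G)"
    using rep_pbracket[OF assms(1) Suc assms(3)] by simp
  then show ?case by (simp add: algebra_simps)
qed

definition vanish :: "nat \<Rightarrow> (nat \<Rightarrow> int) set \<Rightarrow> ((nat \<Rightarrow> int) \<Rightarrow> bool) \<Rightarrow> fdata \<Rightarrow> bool" where
  "vanish n N P c \<longleftrightarrow> (\<forall>\<mu>. P \<mu> \<longrightarrow> (\<forall>I\<in>Ug n N. c \<mu> I = 0))"

definition lowP :: "nat \<Rightarrow> (nat \<Rightarrow> int) \<Rightarrow> bool" where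
  "lowP t \<mu> \<longleftrightarrow> (\<exists>i. 1 \<le> i \<and> i \<le> t \<and> \<mu> i \<noteq> 0)"

definition indep :: "nat \<Rightarrow> (nat \<Rightarrow> int) set \<Rightarrow> nat \<Rightarrow> fdata \<Rightarrow> bool" where
  "indep n N i c \<longleftrightarrow> (\<forall>\<mu> I z. I \<in> Ug n N \<longrightarrow> I(i:=z) \<in> Ug n N \<longrightarrow> c \<mu> (I(i:=z)) = c \<mu> I)"

lemma vanishD: "vanish n N P c \<Longrightarrow> P \<mu> \<Longrightarrow> I \<in> Ug n N \<Longrightarrow> c \<mu> I = 0"
  unfolding vanish_def by blast

lemma eqvD: "eqv n N c d \<Longrightarrow> I \<in> Ug n N \<Longrightarrow> c \<mu> I = d \<mu> I"
  unfolding eqv_def by blast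

lemma eqv_refl: "eqv n N c c" unfolding eqv_def by auto
lemma eqv_sym: "eqv n N c d \<Longrightarrow> eqv n N d c" unfolding eqv_def by auto
lemma eqv_trans: "eqv n N c d \<Longrightarrow> eqv n N d e \<Longrightarrow> eqv n N c e" unfolding eqv_def by auto

lemma fsupp_dphi: "fsupp (dphi i c) \<subseteq> fsupp c"
  by (rule fsupp_subI) (auto simp: dphi_def intro: in_fsupp)

lemma fin_dphi: "finite (fsupp c) \<Longrightarrow> finite (fsupp (dphi i c))"
  using fsupp_dphi finite_subset by blast

lemma fin_dI: "finite (fsupp c) \<Longrightarrow> finite (fsupp (dI i c))"
  using dI_fsupp finite_subset by blast

lemma eqv_fmult:
  assumes "finite (fsupp c)" "finite (fsupp c')" "eqv n N c c'" "eqv n N d d'"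
  shows "eqv n N (fmult c d) (fmult c' d')"
  unfolding eqv_def
proof (intro allI ballI)
  fix \<mu> I assume I: "I \<in> Ug n N"
  have "fmult c d \<mu> I = (\<Sum>\<nu>\<in>fsupp c \<union> fsupp c'. c \<nu> I * d (\<mu> - \<nu>) I)"
    using assms by (intro fmult_sup) auto
  also have "\<dots> = (\<Sum>\<nu>\<in>fsupp c \<union> fsupp c'. c' \<nu> I * d' (\<mu> - \<nu>) I)"
    using assms(3,4) I by (intro sum.cong) (auto simp: eqv_def)
  also have "\<dots> = fmult c' d' \<mu> I"
    using assms by (intro fmult_sup[symmetric]) auto
  finally show "fmult c d \<mu> I = fmult c' d' \<mu> I" .
qed

lemma eqv_dI:
  assumes "finite N" "eqv n N c c'"
  shows "eqv n N (dI i c) (dI i c')"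
  unfolding eqv_def dI_def
proof (intro allI ballI)
  fix \<mu> I assume I: "I \<in> Ug n N"
  have "eventually (\<lambda>z. c \<mu> (I(i:=z)) = c' \<mu> (I(i:=z))) (nhds (I i))"
    using ev_line_Ug[OF assms(1) I, of i] by eventually_elim (use assms(2) in \<open>auto simp: eqv_def\<close>)
  then show "deriv (\<lambda>z. c \<mu> (I(i := z))) (I i) = deriv (\<lambda>z. c' \<mu> (I(i := z))) (I i)"
    by (rule deriv_cong_ev) simp
qed

lemma eqv_dphi: "eqv n N c c' \<Longrightarrow> eqv n N (dphi i c) (dphi i c')"
  unfolding eqv_def dphi_def by auto

lemma eqv_pbracket1:
  assumes "finite N" "finite (fsupp F)" "finite (fsupp F')" "eqv n N F F'"
  shows "eqv n N (pbracket n F G) (pbracket n F' G)"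
  unfolding eqv_def pbracket_def fsub_def
proof (intro allI ballI sum.cong refl)
  fix \<mu> I i assume I: "I \<in> Ug n N"
  have a: "eqv n N (fmult (dphi i F) (dI i G)) (fmult (dphi i F') (dI i G))"
    using assms by (intro eqv_fmult fin_dphi eqv_dphi eqv_refl)
  have b: "eqv n N (fmult (dI i F) (dphi i G)) (fmult (dI i F') (dphi i G))"
    using assms by (intro eqv_fmult fin_dI eqv_dI eqv_refl)
  show "fmult (dphi i F) (dI i G) \<mu> I - fmult (dI i F) (dphi i G) \<mu> I =
        fmult (dphi i F') (dI i G) \<mu> I - fmult (dI i F') (dphi i G) \<mu> I"
    using eqvD[OF a I] eqvD[OF b I] by simp
qed

lemma eqv_adpow:
  assumes "finite N" "rep n N d F" "rep n N d' F'" "rep n N e ch" "eqv n N F F'"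
  shows "eqv n N (adpow n ch s F) (adpow n ch s F')"
proof (induction s)
  case 0 then show ?case using assms by simp
next
  case (Suc s)
  have f1: "finite (fsupp (adpow n ch s F))" using rep_fin[OF rep_adpow[OF assms(1,2,4)]] .
  have f2: "finite (fsupp (adpow n ch s F'))" using rep_fin[OF rep_adpow[OF assms(1,3,4)]] .
  show ?case using eqv_pbracket1[OF assms(1) f1 f2 Suc] by simp
qed

lemma van_eqv: "eqv n N c c' \<Longrightarrow> vanish n N P c \<Longrightarrow> vanish n N P c'"
  unfolding eqv_def vanish_def by auto

lemma van_mono: "vanish n N P c \<Longrightarrow> (\<And>\<mu>. Q \<mu> \<Longrightarrow> P \<mu>) \<Longrightarrow> vanish n N Q c"
  unfolding vanish_def by auto

lemma van_dphi: "vanish n N P c \<Longrightarrow> vanish n N P (dphi i c)"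
  unfolding vanish_def dphi_def by auto

lemma van_scale: "vanish n N P c \<Longrightarrow> vanish n N P (fscale a c)"
  unfolding vanish_def fscale_def by auto

lemma van_resp: "vanish n N P c \<Longrightarrow> vanish n N P (resp k c)"
  unfolding vanish_def resp_def by auto

lemma van_nresp: "vanish n N P c \<Longrightarrow> vanish n N P (nresp k c)"
  unfolding vanish_def nresp_def by auto

lemma van_add: "vanish n N P c \<Longrightarrow> vanish n N P d \<Longrightarrow> vanish n N P (fadd c d)"
  unfolding vanish_def fadd_def by auto

lemma van_sub: "vanish n N P c \<Longrightarrow> vanish n N P d \<Longrightarrow> vanish n N P (fsub c d)"
  unfolding vanish_def fsub_def by auto

lemma van_sum: "(\<And>l. l \<in> A \<Longrightarrow> vanish n N P (c l)) \<Longrightarrow> vanish n N P (\<lambda>\<mu> I. \<Sum>l\<in>A. c l \<mu> I)"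
  unfolding vanish_def by auto

lemma deriv_loc_const:
  assumes "eventually (\<lambda>z. f z = a) (nhds x)"
  shows "deriv f x = (0::complex)"
proof -
  have "deriv f x = deriv (\<lambda>z. a) x" by (rule deriv_cong_ev[OF assms refl])
  also have "\<dots> = 0" by (rule DERIV_imp_deriv) simp
  finally show ?thesis .
qed

lemma van_dI: assumes "finite N" "vanish n N P c" shows "vanish n N P (dI i c)"
  unfolding vanish_def dI_def
proof (intro allI impI ballI)
  fix \<mu> I assume P: "P \<mu>" and I: "I \<in> Ug n N"
  have "eventually (\<lambda>z. c \<mu> (I(i:=z)) = 0) (nhds (I i))"
    using ev_line_Ug[OF assms(1) I, of i] by eventually_elim (use assms(2) P in \<open>auto simp: vanish_def\<close>)
  then show "deriv (\<lambda>z. c \<mu> (I(i := z))) (I i) = 0" by (rule deriv_loc_const)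
qed

lemma van_Qop: "vanish n N (\<lambda>\<mu>. \<mu> k \<noteq> 0 \<and> P \<mu>) c \<Longrightarrow> vanish n N P (Qop n k c)"
  unfolding vanish_def Qop_def by auto

lemma van_fmult_low:
  assumes "vanish n N (lowP t) c" "vanish n N (lowP t) d"
  shows "vanish n N (lowP t) (fmult c d)"
  unfolding vanish_def fmult_def
proof (intro allI impI ballI sum.neutral)
  fix \<mu> I \<nu> assume L: "lowP t \<mu>" and I: "I \<in> Ug n N" and "\<nu> \<in> fsupp c"
  from L obtain i where i: "1 \<le> i" "i \<le> t" "\<mu> i \<noteq> 0" unfolding lowP_def by blast
  show "c \<nu> I * d (\<mu> - \<nu>) I = 0"
  proof (cases "\<nu> i = 0")
    case True
    then have "lowP t (\<mu> - \<nu>)" using i unfolding lowP_def by (intro exI[of _ i]) (auto simp: fun_diff_def)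
    then show ?thesis using vanishD[OF assms(2) _ I] by simp
  next
    case False
    then have "lowP t \<nu>" using i unfolding lowP_def by blast
    then show ?thesis using vanishD[OF assms(1) _ I] by simp
  qed
qed

lemma van_fmult_z2: "vanish n N (\<lambda>_. True) d \<Longrightarrow> vanish n N P (fmult c d)"
  unfolding vanish_def fmult_def by auto

lemma van_fmult_z1: "vanish n N (\<lambda>_. True) c \<Longrightarrow> vanish n N P (fmult c d)"
  unfolding vanish_def fmult_def by auto

lemma van_pbracket_low:
  assumes "finite N" "vanish n N (lowP t) c" "vanish n N (lowP t) ch"
  shows "vanish n N (lowP t) (pbracket n c ch)"
  unfolding pbracket_def
  by (intro van_sum van_sub van_fmult_low van_dphi van_dI assms)

lemma van_adpow_low:
  assumes "finite N" "vanish n N (lowP t) c" "vanish n N (lowP t) ch"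
  shows "vanish n N (lowP t) (adpow n ch s c)"
  by (induction s) (auto intro: van_pbracket_low assms)

lemma lowP_mono: "lowP t \<mu> \<Longrightarrow> t \<le> t' \<Longrightarrow> lowP t' \<mu>"
  unfolding lowP_def by auto

lemma indepD: "indep n N i c \<Longrightarrow> I \<in> Ug n N \<Longrightarrow> I(i:=z) \<in> Ug n N \<Longrightarrow> c \<mu> (I(i:=z)) = c \<mu> I"
  unfolding indep_def by blast

lemma ind_const: "(\<And>\<mu> I J. c \<mu> I = c \<mu> J) \<Longrightarrow> indep n N i c"
  unfolding indep_def by metis

lemma ind_dphi: "indep n N i c \<Longrightarrow> indep n N i (dphi j c)"
  unfolding indep_def dphi_def by auto

lemma ind_scale: "indep n N i c \<Longrightarrow> indep n N i (fscale a c)"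
  unfolding indep_def fscale_def by auto

lemma ind_resp: "indep n N i c \<Longrightarrow> indep n N i (resp k c)"
  unfolding indep_def resp_def by auto

lemma ind_nresp: "indep n N i c \<Longrightarrow> indep n N i (nresp k c)"
  unfolding indep_def nresp_def by auto

lemma ind_add: "indep n N i c \<Longrightarrow> indep n N i d \<Longrightarrow> indep n N i (fadd c d)"
  unfolding indep_def fadd_def by auto

lemma ind_sub: "indep n N i c \<Longrightarrow> indep n N i d \<Longrightarrow> indep n N i (fsub c d)"
  unfolding indep_def fsub_def by auto

lemma ind_sum: "(\<And>l. l \<in> A \<Longrightarrow> indep n N i (c l)) \<Longrightarrow> indep n N i (\<lambda>\<mu> I. \<Sum>l\<in>A. c l \<mu> I)"
  unfolding indep_def by (auto intro!: sum.cong)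

lemma ind_fmult: "indep n N i c \<Longrightarrow> indep n N i d \<Longrightarrow> indep n N i (fmult c d)"
  unfolding indep_def fmult_def by (auto intro!: sum.cong)

lemma ind_dI_zero:
  assumes "finite N" "indep n N i c" "I \<in> Ug n N"
  shows "dI i c \<mu> I = 0"
  unfolding dI_def
proof (rule deriv_loc_const)
  show "eventually (\<lambda>z. c \<mu> (I(i:=z)) = c \<mu> I) (nhds (I i))"
    using ev_line_Ug[OF assms(1,3), of i] by eventually_elim (use assms in \<open>auto simp: indep_def\<close>)
qed

lemma van_dI_indep: "finite N \<Longrightarrow> indep n N i c \<Longrightarrow> vanish n N (\<lambda>_. True) (dI i c)"
  unfolding vanish_def using ind_dI_zero by blast

lemma ind_dI:
  assumes "finite N" "indep n N i c"
  shows "indep n N i (dI j c)"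
  unfolding indep_def
proof (intro allI impI)
  fix \<mu> I z assume I: "I \<in> Ug n N" and Iz: "I(i:=z) \<in> Ug n N"
  show "dI j c \<mu> (I(i:=z)) = dI j c \<mu> I"
  proof (cases "j = i")
    case True
    then show ?thesis using ind_dI_zero[OF assms I] ind_dI_zero[OF assms Iz] by simp
  next
    case False
    have e2: "eventually (\<lambda>w. (I(i:=z))(j:=w) \<in> Ug n N) (nhds (I j))"
      using ev_line_Ug[OF assms(1) Iz, of j] False by simp
    have ev: "eventually (\<lambda>w. c \<mu> ((I(i:=z))(j:=w)) = c \<mu> (I(j:=w))) (nhds (I j))"
      using ev_line_Ug[OF assms(1) I, of j] e2
    proof eventually_elim
      case (elim w)
      have "(I(i:=z))(j:=w) = (I(j:=w))(i:=z)" using False by (auto simp: fun_eq_iff)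
      then show ?case using elim assms(2) unfolding indep_def by metis
    qed
    have "dI j c \<mu> (I(i:=z)) = deriv (\<lambda>w. c \<mu> ((I(i:=z))(j:=w))) (I j)"
      unfolding dI_def using False by simp
    also have "\<dots> = deriv (\<lambda>w. c \<mu> (I(j:=w))) (I j)" by (rule deriv_cong_ev[OF ev refl])
    also have "\<dots> = dI j c \<mu> I" unfolding dI_def by simp
    finally show ?thesis .
  qed
qed

lemma ind_Qop:
  assumes "indep n N i c" "vanish n N (\<lambda>\<mu>. \<mu> k \<noteq> 0 \<and> \<mu> i \<noteq> 0) c"
  shows "indep n N i (Qop n k c)"
  unfolding indep_def
proof (intro allI impI)
  fix \<mu> I z assume I: "I \<in> Ug n N" and Iz: "I(i:=z) \<in> Ug n N"
  show "Qop n k c \<mu> (I(i:=z)) = Qop n k c \<mu> I"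
  proof (cases "\<mu> k \<noteq> 0 \<and> \<mu> i \<noteq> 0")
    case True
    then show ?thesis using vanishD[OF assms(2) True I] vanishD[OF assms(2) True Iz]
      unfolding Qop_def by simp
  next
    case False
    have "dotI n (I(i:=z)) \<mu> = dotI n I \<mu>" if "\<mu> i = 0" using that by (simp add: dotI_upd)
    then show ?thesis using False indepD[OF assms(1) I Iz] unfolding Qop_def dotI_def[symmetric] by auto
  qed
qed

lemma ind_pbracket:
  assumes "finite N" "indep n N i c" "indep n N i ch"
  shows "indep n N i (pbracket n c ch)"
  unfolding pbracket_def
  by (intro ind_sum ind_sub ind_fmult ind_dphi ind_dI assms)

lemma ind_adpow:
  assumes "finite N" "indep n N i c" "indep n N i ch"
  shows "indep n N i (adpow n ch s c)"
  by (induction s) (auto intro: ind_pbracket assms)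

lemma dI_add_eq:
  assumes "finite N" "rep n N d c" "rep n N d' c'" "I \<in> Ug n N"
  shows "dI i (fadd c c') \<mu> I = dI i c \<mu> I + dI i c' \<mu> I"
proof -
  have "((\<lambda>z. c \<mu> (I(i:=z)) + c' \<mu> (I(i:=z))) has_field_derivative dI i c \<mu> I + dI i c' \<mu> I) (at (I i))"
    using DERIV_add[OF rep_dI_DERIV[OF assms(1,2,4)] rep_dI_DERIV[OF assms(1,3,4)]] .
  then have "deriv (\<lambda>z. c \<mu> (I(i:=z)) + c' \<mu> (I(i:=z))) (I i) = dI i c \<mu> I + dI i c' \<mu> I"
    by (rule DERIV_imp_deriv)
  then show ?thesis unfolding dI_def[of i "fadd c c'"] unfolding fadd_def .
qed

lemma dI_cmul_eq:
  assumes "finite N" "rep n N d c" "I \<in> Ug n N"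
  shows "dI i (\<lambda>\<mu> I. w \<mu> * c \<mu> I) \<mu> I = w \<mu> * dI i c \<mu> I"
proof -
  have "((\<lambda>z. w \<mu> * c \<mu> (I(i:=z))) has_field_derivative w \<mu> * dI i c \<mu> I) (at (I i))"
    using DERIV_cmult[OF rep_dI_DERIV[OF assms(1,2,3)]] .
  then have "deriv (\<lambda>z. w \<mu> * c \<mu> (I(i:=z))) (I i) = w \<mu> * dI i c \<mu> I"
    by (rule DERIV_imp_deriv)
  then show ?thesis unfolding dI_def[of i "\<lambda>\<mu> I. w \<mu> * c \<mu> I"] .
qed

lemma fsupp_fadd: "fsupp (fadd c c') \<subseteq> fsupp c \<union> fsupp c'"
  by (rule fsupp_subI) (auto simp: fadd_def not_fsupp_val intro: in_fsupp)

lemma fin_fadd: "finite (fsupp c) \<Longrightarrow> finite (fsupp c') \<Longrightarrow> finite (fsupp (fadd c c'))"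
  using fsupp_fadd finite_subset by blast

lemma fmult_add1:
  assumes "finite (fsupp c)" "finite (fsupp c')"
  shows "fmult (fadd c c') d \<mu> I = fmult c d \<mu> I + fmult c' d \<mu> I"
proof -
  have s: "fsupp (fadd c c') \<subseteq> fsupp c \<union> fsupp c'"
    by (rule fsupp_subI) (auto simp: fadd_def not_fsupp_val intro: in_fsupp)
  have "fmult (fadd c c') d \<mu> I = (\<Sum>\<nu>\<in>fsupp c \<union> fsupp c'. fadd c c' \<nu> I * d (\<mu> - \<nu>) I)"
    using assms s by (intro fmult_sup) auto
  also have "\<dots> = (\<Sum>\<nu>\<in>fsupp c \<union> fsupp c'. c \<nu> I * d (\<mu> - \<nu>) I) + (\<Sum>\<nu>\<in>fsupp c \<union> fsupp c'. c' \<nu> I * d (\<mu> - \<nu>) I)"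
    unfolding fadd_def by (simp add: sum.distrib distrib_right)
  also have "\<dots> = fmult c d \<mu> I + fmult c' d \<mu> I"
    using assms by (simp add: fmult_sup[of "fsupp c \<union> fsupp c'" c] fmult_sup[of "fsupp c \<union> fsupp c'" c'])
  finally show ?thesis .
qed

lemma pbracket_add1:
  assumes "finite N" "rep n N d c" "rep n N d' c'" "rep n N e ch"
  shows "eqv n N (pbracket n (fadd c c') ch) (fadd (pbracket n c ch) (pbracket n c' ch))"
  unfolding eqv_def
proof (intro allI ballI)
  fix \<mu> I assume I: "I \<in> Ug n N"
  have fc: "finite (fsupp c)" "finite (fsupp c')" using assms rep_fin by blast+
  have T: "fsub (fmult (dphi i (fadd c c')) (dI i ch)) (fmult (dI i (fadd c c')) (dphi i ch)) \<mu> I =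
      fsub (fmult (dphi i c) (dI i ch)) (fmult (dI i c) (dphi i ch)) \<mu> I +
      fsub (fmult (dphi i c') (dI i ch)) (fmult (dI i c') (dphi i ch)) \<mu> I" for i
  proof -
    have dp: "dphi i (fadd c c') = fadd (dphi i c) (dphi i c')"
      unfolding dphi_def fadd_def by (simp add: fun_eq_iff distrib_left)
    have e1: "eqv n N (dI i (fadd c c')) (fadd (dI i c) (dI i c'))"
      unfolding eqv_def using dI_add_eq[OF assms(1-3)] by (simp add: fadd_def)
    have fdi: "finite (fsupp (dI i (fadd c c')))" using fc by (intro fin_dI fin_fadd)
    have fdi2: "finite (fsupp (fadd (dI i c) (dI i c')))" using fc by (intro fin_dI fin_fadd)
    have "fmult (dI i (fadd c c')) (dphi i ch) \<mu> I = fmult (fadd (dI i c) (dI i c')) (dphi i ch) \<mu> I"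
      using eqvD[OF eqv_fmult[OF fdi fdi2 e1 eqv_refl] I] .
    also have "\<dots> = fmult (dI i c) (dphi i ch) \<mu> I + fmult (dI i c') (dphi i ch) \<mu> I"
      using fc by (intro fmult_add1 fin_dI)
    finally have B: "fmult (dI i (fadd c c')) (dphi i ch) \<mu> I = fmult (dI i c) (dphi i ch) \<mu> I + fmult (dI i c') (dphi i ch) \<mu> I" .
    have A: "fmult (dphi i (fadd c c')) (dI i ch) \<mu> I = fmult (dphi i c) (dI i ch) \<mu> I + fmult (dphi i c') (dI i ch) \<mu> I"
      unfolding dp using fc by (intro fmult_add1 fin_dphi)
    show ?thesis unfolding fsub_def A B by simp
  qed
  show "pbracket n (fadd c c') ch \<mu> I = fadd (pbracket n c ch) (pbracket n c' ch) \<mu> I"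
    unfolding pbracket_def fadd_def[of "\<lambda>\<mu> I. \<Sum>i = 1..n. _ i \<mu> I"] T by (simp add: sum.distrib)
qed

lemma fmult_dphi_shift:
  assumes "finite (fsupp X)" "vanish n N (\<lambda>\<mu>. \<mu> a \<noteq> 0) Y" "I \<in> Ug n N"
  shows "\<i> * of_int (\<mu> a) * fmult X Y \<mu> I = fmult (dphi a X) Y \<mu> I"
proof -
  have "\<i> * of_int (\<mu> a) * fmult X Y \<mu> I = (\<Sum>\<nu>\<in>fsupp X. \<i> * of_int (\<mu> a) * (X \<nu> I * Y (\<mu> - \<nu>) I))"
    using assms by (simp add: fmult_sup sum_distrib_left)
  also have "\<dots> = (\<Sum>\<nu>\<in>fsupp X. dphi a X \<nu> I * Y (\<mu> - \<nu>) I)"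
  proof (intro sum.cong refl)
    fix \<nu>
    show "\<i> * of_int (\<mu> a) * (X \<nu> I * Y (\<mu> - \<nu>) I) = dphi a X \<nu> I * Y (\<mu> - \<nu>) I"
    proof (cases "(\<mu> - \<nu>) a = 0")
      case True
      then have "\<mu> a = \<nu> a" by (simp add: fun_diff_def)
      then show ?thesis unfolding dphi_def by simp
    next
      case False
      then show ?thesis using vanishD[OF assms(2) _ assms(3)] by simp
    qed
  qed
  also have "\<dots> = fmult (dphi a X) Y \<mu> I"
    using assms(1) fsupp_dphi by (intro fmult_sup[symmetric]) auto
  finally show ?thesis .
qed

lemma dphi_pbracket:
  assumes "finite N" "rep n N d G" "rep n N e ch" "vanish n N (\<lambda>\<mu>. \<mu> a \<noteq> 0) ch"
  shows "eqv n N (dphi a (pbracket n G ch)) (pbracket n (dphi a G) ch)"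
  unfolding eqv_def
proof (intro allI ballI)
  fix \<mu> I assume I: "I \<in> Ug n N"
  have fG: "finite (fsupp G)" using rep_fin[OF assms(2)] .
  have T: "\<i> * of_int (\<mu> a) * fsub (fmult (dphi i G) (dI i ch)) (fmult (dI i G) (dphi i ch)) \<mu> I =
      fsub (fmult (dphi i (dphi a G)) (dI i ch)) (fmult (dI i (dphi a G)) (dphi i ch)) \<mu> I" for i
  proof -
    have v1: "vanish n N (\<lambda>\<mu>. \<mu> a \<noteq> 0) (dI i ch)" by (rule van_dI[OF assms(1,4)])
    have v2: "vanish n N (\<lambda>\<mu>. \<mu> a \<noteq> 0) (dphi i ch)" by (rule van_dphi[OF assms(4)])
    have A: "\<i> * of_int (\<mu> a) * fmult (dphi i G) (dI i ch) \<mu> I = fmult (dphi a (dphi i G)) (dI i ch) \<mu> I"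
      by (rule fmult_dphi_shift[OF fin_dphi[OF fG] v1 I])
    have dd: "dphi a (dphi i G) = dphi i (dphi a G)" unfolding dphi_def by (simp add: fun_eq_iff ac_simps)
    have B: "\<i> * of_int (\<mu> a) * fmult (dI i G) (dphi i ch) \<mu> I = fmult (dphi a (dI i G)) (dphi i ch) \<mu> I"
      by (rule fmult_dphi_shift[OF fin_dI[OF fG] v2 I])
    have e: "eqv n N (dphi a (dI i G)) (dI i (dphi a G))"
      unfolding eqv_def dphi_def using dI_cmul_eq[OF assms(1,2), of _ i "\<lambda>\<mu>. \<i> * of_int (\<mu> a)"]
      by (simp add: dphi_def)
    have B2: "fmult (dphi a (dI i G)) (dphi i ch) \<mu> I = fmult (dI i (dphi a G)) (dphi i ch) \<mu> I"
      using eqvD[OF eqv_fmult[OF fin_dphi[OF fin_dI[OF fG]] fin_dI[OF fin_dphi[OF fG]] e eqv_refl] I] .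
    show ?thesis unfolding fsub_def using A B B2 dd by (simp add: right_diff_distrib)
  qed
  show "dphi a (pbracket n G ch) \<mu> I = pbracket n (dphi a G) ch \<mu> I"
    unfolding pbracket_def dphi_def[of a "\<lambda>\<mu> I. \<Sum>i = 1..n. _ i \<mu> I"]
    using T by (simp add: sum_distrib_left)
qed

lemma dphi_adpow:
  assumes "finite N" "rep n N d G" "rep n N e ch" "vanish n N (\<lambda>\<mu>. \<mu> a \<noteq> 0) ch"
  shows "eqv n N (dphi a (adpow n ch s G)) (adpow n ch s (dphi a G))"
proof (induction s)
  case 0 then show ?case by (simp add: eqv_refl)
next
  case (Suc s)
  have r1: "rep n N (d + s * Suc e) (adpow n ch s G)" by (rule rep_adpow[OF assms(1-3)])
  have r2: "rep n N (d + s * Suc e) (dphi a (adpow n ch s G))" by (rule rep_dphi[OF r1])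
  have r3: "rep n N (d + s * Suc e) (adpow n ch s (dphi a G))" by (rule rep_adpow[OF assms(1) rep_dphi[OF assms(2)] assms(3)])
  have "eqv n N (dphi a (pbracket n (adpow n ch s G) ch)) (pbracket n (dphi a (adpow n ch s G)) ch)"
    by (rule dphi_pbracket[OF assms(1) r1 assms(3,4)])
  moreover have "eqv n N (pbracket n (dphi a (adpow n ch s G)) ch) (pbracket n (adpow n ch s (dphi a G)) ch)"
    by (rule eqv_pbracket1[OF assms(1) rep_fin[OF r2] rep_fin[OF r3] Suc])
  ultimately show ?case by (simp add: eqv_trans[of n N])
qed

definition uok :: "nat \<Rightarrow> (nat \<Rightarrow> int \<Rightarrow> complex) \<Rightarrow> bool" where
  "uok n u \<longleftrightarrow> (\<forall>i\<in>{1..n-1}. finite {m. u i m \<noteq> 0}) \<and> (\<forall>i\<in>{1..n-1}. u i 0 = 0)"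

definition emode :: "nat \<Rightarrow> int \<Rightarrow> nat \<Rightarrow> int" where
  "emode i m = (\<lambda>l. if l = i + 1 then m else if l = i then - m else 0)"

lemma f0_alt: "f0data n u \<mu> I = (\<Sum>i=1..n-1. \<Sum>m\<in>{m. u i m \<noteq> 0}. if \<mu> = emode i m then u i m else 0)"
  unfolding f0data_def emode_def by simp

lemma f0_const: "f0data n u \<mu> I = f0data n u \<mu> J"
  unfolding f0data_def by simp

lemma f0_nz:
  assumes "uok n u" "f0data n u \<mu> I \<noteq> 0"
  shows "\<exists>i m. i \<in> {1..n-1} \<and> u i m \<noteq> 0 \<and> m \<noteq> 0 \<and> \<mu> = emode i m"
proof -
  from assms(2) obtain i where i: "i \<in> {1..n-1}" and
    nz: "(\<Sum>m\<in>{m. u i m \<noteq> 0}. if \<mu> = emode i m then u i m else 0) \<noteq> 0"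
    unfolding f0_alt by (rule sum.not_neutral_contains_not_neutral)
  from nz obtain m where m: "m \<in> {m. u i m \<noteq> 0}" "(if \<mu> = emode i m then u i m else 0) \<noteq> 0"
    by (rule sum.not_neutral_contains_not_neutral)
  have "m \<noteq> 0" using m assms(1) i unfolding uok_def by auto
  then show ?thesis using i m by (intro exI[of _ i] exI[of _ m]) (auto split: if_splits)
qed

lemma emode_nz: "emode i m l \<noteq> 0 \<Longrightarrow> l = i \<or> l = i + 1"
  unfolding emode_def by (auto split: if_splits)

lemma emode_val: "m \<noteq> 0 \<Longrightarrow> emode i m i \<noteq> 0 \<and> emode i m (i+1) \<noteq> 0"
  unfolding emode_def by auto

lemma f0_fin:
  assumes "uok n u"
  shows "finite (fsupp (f0data n u))"
proof -
  have "fsupp (f0data n u) \<subseteq> (\<Union>i\<in>{1..n-1}. emode i ` {m. u i m \<noteq> 0})"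
    by (rule fsupp_subI) (use f0_nz[OF assms] in blast)
  moreover have "finite (\<Union>i\<in>{1..n-1}. emode i ` {m. u i m \<noteq> 0})"
    using assms unfolding uok_def by auto
  ultimately show ?thesis using finite_subset by blast
qed

lemma rep_const:
  assumes "finite (fsupp c)" "\<And>\<mu> I J. c \<mu> I = c \<mu> J"
  shows "rep n N 0 c"
  unfolding rep_def
proof (intro conjI allI assms(1))
  fix \<mu>
  show "\<exists>f. alg n N 0 f \<and> (\<forall>I\<in>Ug n N. c \<mu> I = f I)"
    using assms(2) by (intro exI[of _ "\<lambda>I. c \<mu> (\<lambda>_. 0)"]) (auto intro: alg.cst)
qed

lemma rep_f0: "uok n u \<Longrightarrow> rep n N 0 (f0data n u)"
  by (intro rep_const f0_fin f0_const)

lemma f0_NRlow: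
  assumes "uok n u"
  shows "vanish n N (\<lambda>\<mu>. \<mu> k \<noteq> 0 \<and> lowP (k - 2) \<mu>) (f0data n u)"
  unfolding vanish_def
proof (intro allI impI ballI)
  fix \<mu> I assume A: "\<mu> k \<noteq> 0 \<and> lowP (k - 2) \<mu>"
  show "f0data n u \<mu> I = 0"
  proof (rule ccontr)
    assume "f0data n u \<mu> I \<noteq> 0"
    then obtain i m where im: "\<mu> = emode i m" using f0_nz[OF assms] by blast
    from A obtain l where l: "1 \<le> l" "l \<le> k - 2" "\<mu> l \<noteq> 0" unfolding lowP_def by blast
    have "k = i \<or> k = i + 1" using A im emode_nz by blast
    moreover have "l = i \<or> l = i + 1" using l im emode_nz by blast
    ultimately show False using l by auto
  qed
qed

lemma f0_dphi_low:
  assumes "uok n u"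
  shows "vanish n N (lowP (i - 2)) (dphi i (f0data n u))"
  unfolding vanish_def
proof (intro allI impI ballI)
  fix \<mu> I assume A: "lowP (i - 2) \<mu>"
  show "dphi i (f0data n u) \<mu> I = 0"
  proof (rule ccontr)
    assume nz: "dphi i (f0data n u) \<mu> I \<noteq> 0"
    then have "f0data n u \<mu> I \<noteq> 0" "\<mu> i \<noteq> 0" unfolding dphi_def by auto
    then obtain i' m where im: "\<mu> = emode i' m" using f0_nz[OF assms] by blast
    from A obtain l where l: "1 \<le> l" "l \<le> i - 2" "\<mu> l \<noteq> 0" unfolding lowP_def by blast
    have "i = i' \<or> i = i' + 1" using \<open>\<mu> i \<noteq> 0\<close> im emode_nz by blast
    moreover have "l = i' \<or> l = i' + 1" using l im emode_nz by blast
    ultimately show False using l by auto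
  qed
qed

lemma dphi_resp: "dphi i (resp k c) = resp k (dphi i c)"
  unfolding dphi_def resp_def by (auto simp: fun_eq_iff)

lemma van_Nmono: "vanish n N P c \<Longrightarrow> N \<subseteq> N' \<Longrightarrow> vanish n N' P c"
  unfolding vanish_def using Ug_anti by blast

lemma ind_Nmono: "indep n N i c \<Longrightarrow> N \<subseteq> N' \<Longrightarrow> indep n N' i c"
  unfolding indep_def using Ug_anti by blast

definition INVm :: "nat \<Rightarrow> nat \<Rightarrow> (nat \<Rightarrow> int \<Rightarrow> complex) \<Rightarrow> (nat \<Rightarrow> int) set \<Rightarrow> nat \<Rightarrow> bool" where
  "INVm n k u N m \<longleftrightarrow> rep n N (2 * m) (fseq n k u m) \<and>
     (\<forall>\<mu>\<in>fsupp (fseq n k u m). \<mu> k \<noteq> 0 \<longrightarrow> \<mu> \<in> N) \<and>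
     vanish n N (\<lambda>\<mu>. \<mu> k \<noteq> 0 \<and> lowP (k - m - 2) \<mu>) (fseq n k u m) \<and>
     (1 \<le> m \<longrightarrow> vanish n N (lowP (k - m - 2)) (fseq n k u m)) \<and>
     (\<forall>i. 1 \<le> i \<and> i \<le> k - m - 1 \<longrightarrow> indep n N i (fseq n k u m))"

definition INV :: "nat \<Rightarrow> nat \<Rightarrow> (nat \<Rightarrow> int \<Rightarrow> complex) \<Rightarrow> (nat \<Rightarrow> int) set \<Rightarrow> nat \<Rightarrow> bool" where
  "INV n k u N m0 \<longleftrightarrow> goodN k N \<and> (\<forall>m\<le>m0. INVm n k u N m)"

lemma INVm_mono:
  assumes "INVm n k u N m" "N \<subseteq> N'"
  shows "INVm n k u N' m"
  using assms unfolding INVm_def by (auto intro: rep_mono van_Nmono ind_Nmono)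

lemma INV_base: assumes "uok n u" shows "\<exists>N. INV n k u N 0"
proof (intro exI)
  let ?N = "{\<mu>\<in>fsupp (f0data n u). \<mu> k \<noteq> 0}"
  show "INV n k u ?N 0"
    unfolding INV_def INVm_def goodN_def
    using f0_fin[OF assms] rep_f0[OF assms] f0_NRlow[OF assms]
    by (auto intro: ind_const f0_const)
qed

definition Gl :: "nat \<Rightarrow> nat \<Rightarrow> (nat \<Rightarrow> int \<Rightarrow> complex) \<Rightarrow> nat \<Rightarrow> nat \<Rightarrow> fdata" where
  "Gl n k u m l = fadd (\<lambda>\<nu> J. \<Sum>m'<m. resp k (fseq n k u m') \<nu> J)
     (fsub (fseq n k u m) (fscale (1 / of_nat (l + 1)) (nresp k (fseq n k u m))))"

lemma fseq_Suc: "fseq n k u (Suc m) = (\<lambda>\<mu> I. \<Sum>l=1..k-1. fscale (1 / of_nat (fact l))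
   (adpow n (Qop n k (fseq n k u m)) l (Gl n k u m l)) \<mu> I)"
  unfolding Gl_def by simp

lemma INV_step:
  assumes uok: "uok n u" and inv: "INV n k u N m"
  shows "\<exists>N'. INV n k u N' (Suc m)"
proof -
  have gN: "goodN k N" and IM: "\<And>m'. m' \<le> m \<Longrightarrow> INVm n k u N m'" using inv unfolding INV_def by auto
  have fN: "finite N" using gN unfolding goodN_def by auto
  define Fm where "Fm = fseq n k u m"
  define ch where "ch = Qop n k Fm"
  define t where "t = k - m - 3"
  have IMm: "INVm n k u N m" by (rule IM) simp
  have rF: "rep n N (2 * m) Fm" and QF: "\<forall>\<mu>\<in>fsupp Fm. \<mu> k \<noteq> 0 \<longrightarrow> \<mu> \<in> N"
    and vF3: "vanish n N (\<lambda>\<mu>. \<mu> k \<noteq> 0 \<and> lowP (k - m - 2) \<mu>) Fm"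
    and iF: "\<And>i. 1 \<le> i \<Longrightarrow> i \<le> k - m - 1 \<Longrightarrow> indep n N i Fm"
    using IMm unfolding INVm_def Fm_def by auto
  have rch: "rep n N (Suc (2 * m)) ch" unfolding ch_def by (rule rep_Qop[OF rF QF])
  have vch: "vanish n N (lowP (k - m - 2)) ch" unfolding ch_def by (rule van_Qop[OF vF3])
  have ich: "indep n N i ch" if "1 \<le> i" "i \<le> k - m - 2" for i
    unfolding ch_def
  proof (rule ind_Qop)
    show "indep n N i Fm" using that by (intro iF) auto
    show "vanish n N (\<lambda>\<mu>. \<mu> k \<noteq> 0 \<and> \<mu> i \<noteq> 0) Fm"
      using vF3 by (rule van_mono) (use that in \<open>auto simp: lowP_def\<close>)
  qed
  have rG: "rep n N 0 (Gl n k u m l)" for l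
    unfolding Gl_def
  proof (intro rep_add rep_sub rep_sum rep_scale rep_nresp rep_resp)
    fix m' assume "m' \<in> {..<m}"
    then have "INVm n k u N m'" by (intro IM) auto
    then show "rep n N 0 (fseq n k u m')" unfolding INVm_def by (auto intro: rep_weak)
  next
    show "rep n N 0 (fseq n k u m)" using rF unfolding Fm_def by (auto intro: rep_weak)
    then show "rep n N 0 (fseq n k u m)" .
  qed simp
  have iG: "indep n N i (Gl n k u m l)" if i: "1 \<le> i" "i \<le> k - m - 2" for i l
    unfolding Gl_def
  proof (intro ind_add ind_sub ind_sum ind_scale ind_nresp ind_resp)
    fix m' assume m': "m' \<in> {..<m}"
    then have "INVm n k u N m'" by (intro IM) auto
    moreover have "i \<le> k - m' - 1" using i m' by auto
    ultimately show "indep n N i (fseq n k u m')" unfolding INVm_def using i by auto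
  next
    show "indep n N i (fseq n k u m)" using iF[of i] i unfolding Fm_def by auto
    then show "indep n N i (fseq n k u m)" .
  qed
  define R0 where "R0 = resp k (f0data n u)"
  have rR0: "rep n N 0 R0" unfolding R0_def by (intro rep_resp rep_f0 uok)
  have R0c: "R0 \<mu> I = R0 \<mu> J" for \<mu> I J unfolding R0_def resp_def using f0_const by simp
  have vA: "vanish n N (lowP t) (pbracket n (Gl n k u m l) ch)" for l
  proof -
    define G' where "G' = fsub (Gl n k u m l) R0"
    have eqG: "Gl n k u m l = fadd R0 G'" unfolding G'_def fadd_def fsub_def by (simp add: fun_eq_iff)
    have rG': "rep n N 0 G'" unfolding G'_def by (intro rep_sub rG rR0)
    have vG': "vanish n N (lowP (k - m - 2)) G'"
      unfolding vanish_def
    proof (intro allI impI ballI)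
      fix \<nu> J assume low: "lowP (k - m - 2) \<nu>" and J: "J \<in> Ug n N"
      show "G' \<nu> J = 0"
      proof (cases "m = 0")
        case True
        have F0: "fseq n k u 0 = f0data n u" by simp
        show ?thesis
        proof (cases "\<nu> k = 0")
          case True
          then show ?thesis unfolding G'_def Gl_def fsub_def fadd_def fscale_def nresp_def resp_def R0_def
            using \<open>m = 0\<close> by simp
        next
          case False
          then have "Fm \<nu> J = 0" using vanishD[OF vF3 _ J] low by auto
          then show ?thesis unfolding G'_def Gl_def fsub_def fadd_def fscale_def nresp_def resp_def R0_def
            using \<open>m = 0\<close> unfolding Fm_def by simp
        qed
      next
        case False
        have z: "fseq n k u m' \<nu> J = 0" if "1 \<le> m'" "m' \<le> m" for m'
        proof -
          have "INVm n k u N m'" using that by (intro IM) auto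
          then have "vanish n N (lowP (k - m' - 2)) (fseq n k u m')" unfolding INVm_def using that by auto
          moreover have "lowP (k - m' - 2) \<nu>" using low by (rule lowP_mono) (use that in auto)
          ultimately show ?thesis using J by (simp add: vanishD)
        qed
        have "(\<Sum>m'<m. resp k (fseq n k u m') \<nu> J) = resp k (fseq n k u 0) \<nu> J + (\<Sum>m'\<in>{..<m} - {0}. resp k (fseq n k u m') \<nu> J)"
          using False by (simp add: sum.remove)
        also have "(\<Sum>m'\<in>{..<m} - {0}. resp k (fseq n k u m') \<nu> J) = 0"
          using z by (intro sum.neutral) (auto simp: resp_def)
        finally have s: "(\<Sum>m'<m. resp k (fseq n k u m') \<nu> J) = R0 \<nu> J" unfolding R0_def by simp
        have "fseq n k u m \<nu> J = 0" using z[of m] False by simp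
        then show ?thesis unfolding G'_def Gl_def fsub_def fadd_def s fscale_def nresp_def by simp
      qed
    qed
    have e: "eqv n N (pbracket n (Gl n k u m l) ch) (fadd (pbracket n R0 ch) (pbracket n G' ch))"
      unfolding eqG by (rule pbracket_add1[OF fN rR0 rG' rch])
    have v1: "vanish n N (lowP t) (pbracket n G' ch)"
    proof (rule van_pbracket_low[OF fN])
      show "vanish n N (lowP t) G'" using vG' by (rule van_mono) (auto simp: t_def intro: lowP_mono)
      show "vanish n N (lowP t) ch" using vch by (rule van_mono) (auto simp: t_def intro: lowP_mono)
    qed
    have v2: "vanish n N (lowP t) (pbracket n R0 ch)"
      unfolding pbracket_def
    proof (intro van_sum van_sub)
      fix i assume i: "i \<in> {1..n}"
      show "vanish n N (lowP t) (fmult (dI i R0) (dphi i ch))"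
        by (intro van_fmult_z1 van_dI_indep fN ind_const R0c)
      show "vanish n N (lowP t) (fmult (dphi i R0) (dI i ch))"
      proof (cases "i \<le> k - m - 2")
        case True
        then show ?thesis using i by (intro van_fmult_z2 van_dI_indep fN ich) auto
      next
        case False
        show ?thesis
        proof (rule van_fmult_low)
          have "vanish n N (lowP (i - 2)) (dphi i (f0data n u))" by (rule f0_dphi_low[OF uok])
          then have "vanish n N (lowP t) (dphi i (f0data n u))"
            by (rule van_mono) (use False in \<open>auto simp: t_def intro: lowP_mono\<close>)
          then show "vanish n N (lowP t) (dphi i R0)" unfolding R0_def dphi_resp by (rule van_resp)
          have "vanish n N (lowP t) ch" using vch by (rule van_mono) (auto simp: t_def intro: lowP_mono)
          then show "vanish n N (lowP t) (dI i ch)" by (rule van_dI[OF fN])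
        qed
      qed
    qed
    show ?thesis using van_eqv[OF eqv_sym[OF e] van_add[OF v2 v1]] .
  qed
  have vAs: "vanish n N (lowP t) (adpow n ch (Suc s) (Gl n k u m l))" for s l
  proof (induction s)
    case 0 then show ?case using vA by simp
  next
    case (Suc s)
    have "vanish n N (lowP t) ch" using vch by (rule van_mono) (auto simp: t_def intro: lowP_mono)
    then show ?case using van_pbracket_low[OF fN Suc] by simp
  qed
  define F1 where "F1 = fseq n k u (Suc m)"
  have F1eq: "F1 = (\<lambda>\<mu> I. \<Sum>l=1..k-1. fscale (1 / of_nat (fact l)) (adpow n ch l (Gl n k u m l)) \<mu> I)"
    unfolding F1_def fseq_Suc ch_def Fm_def ..
  have rF1: "rep n N (2 * Suc m) F1"
    unfolding F1eq
  proof (intro rep_sum rep_scale)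
    fix l assume l: "l \<in> {1..k-1}"
    have "rep n N (0 + l * Suc (Suc (2 * m))) (adpow n ch l (Gl n k u m l))"
      by (rule rep_adpow[OF fN rG rch])
    moreover have "2 * Suc m \<le> 0 + l * Suc (Suc (2 * m))" using l by (cases l) auto
    ultimately show "rep n N (2 * Suc m) (adpow n ch l (Gl n k u m l))" by (rule rep_weak)
  qed simp
  have vF1: "vanish n N (lowP (k - Suc m - 2)) F1"
    unfolding F1eq
  proof (intro van_sum van_scale)
    fix l assume l: "l \<in> {1..k-1}"
    then obtain s where "l = Suc s" by (cases l) auto
    then show "vanish n N (lowP (k - Suc m - 2)) (adpow n ch l (Gl n k u m l))"
    proof -
      have "k - Suc m - 2 = t" unfolding t_def by simp
      then show ?thesis using vAs[of s l] \<open>l = Suc s\<close> by simp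
    qed
  qed
  have iF1: "indep n N i F1" if "1 \<le> i" "i \<le> k - Suc m - 1" for i
    unfolding F1eq using that by (intro ind_sum ind_scale ind_adpow fN iG ich) auto
  define N' where "N' = N \<union> {\<mu>\<in>fsupp F1. \<mu> k \<noteq> 0}"
  have NN': "N \<subseteq> N'" unfolding N'_def by auto
  have gN': "goodN k N'" using gN rep_fin[OF rF1] unfolding N'_def goodN_def by auto
  have "INVm n k u N' (Suc m)"
    unfolding INVm_def F1_def[symmetric]
  proof (intro conjI allI impI)
    show "rep n N' (2 * Suc m) F1" by (rule rep_mono[OF rF1 NN'])
    show "\<forall>\<mu>\<in>fsupp F1. \<mu> k \<noteq> 0 \<longrightarrow> \<mu> \<in> N'" unfolding N'_def by auto
    show "vanish n N' (lowP (k - Suc m - 2)) F1" by (rule van_Nmono[OF vF1 NN'])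
    then show "vanish n N' (\<lambda>\<mu>. \<mu> k \<noteq> 0 \<and> lowP (k - Suc m - 2) \<mu>) F1" by (rule van_mono) auto
    fix i assume "1 \<le> i \<and> i \<le> k - Suc m - 1"
    then show "indep n N' i F1" using iF1 ind_Nmono[OF _ NN'] by blast
  qed
  then have "INV n k u N' (Suc m)"
    unfolding INV_def using gN' IM INVm_mono[OF _ NN'] by (auto simp: le_Suc_eq)
  then show ?thesis by blast
qed

lemma INV_all: "uok n u \<Longrightarrow> \<exists>N. INV n k u N m"
proof (induction m)
  case 0 then show ?case by (rule INV_base)
next
  case (Suc m) then show ?case using INV_step by blast
qed

lemma feval_eqv:
  assumes "finite (fsupp c)" "finite (fsupp d)" "eqv n N c d" "I \<in> Ug n N"
  shows "feval n c I \<phi> = feval n d I \<phi>"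
proof -
  have "feval n c I \<phi> = (\<Sum>\<mu>\<in>fsupp c \<union> fsupp d. c \<mu> I * exp (\<i> * mu_dot_phi n \<mu> \<phi>))"
    using assms by (intro feval_sup) auto
  also have "\<dots> = (\<Sum>\<mu>\<in>fsupp c \<union> fsupp d. d \<mu> I * exp (\<i> * mu_dot_phi n \<mu> \<phi>))"
    using assms(3,4) by (intro sum.cong) (auto simp: eqv_def)
  also have "\<dots> = feval n d I \<phi>"
    using assms by (intro feval_sup[symmetric]) auto
  finally show ?thesis .
qed

lemma feval_fadd:
  assumes "finite (fsupp c)" "finite (fsupp d)"
  shows "feval n (fadd c d) I \<phi> = feval n c I \<phi> + feval n d I \<phi>"
proof -
  have "feval n (fadd c d) I \<phi> = (\<Sum>\<mu>\<in>fsupp c \<union> fsupp d. fadd c d \<mu> I * exp (\<i> * mu_dot_phi n \<mu> \<phi>))"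
    using assms fsupp_fadd by (intro feval_sup) auto
  also have "\<dots> = (\<Sum>\<mu>\<in>fsupp c \<union> fsupp d. c \<mu> I * exp (\<i> * mu_dot_phi n \<mu> \<phi>)) +
                  (\<Sum>\<mu>\<in>fsupp c \<union> fsupp d. d \<mu> I * exp (\<i> * mu_dot_phi n \<mu> \<phi>))"
    unfolding fadd_def by (simp add: sum.distrib distrib_right)
  also have "\<dots> = feval n c I \<phi> + feval n d I \<phi>"
    using assms by (simp add: feval_sup[of "fsupp c \<union> fsupp d" c] feval_sup[of "fsupp c \<union> fsupp d" d])
  finally show ?thesis .
qed

lemma feval_fscale:
  assumes "finite (fsupp c)"
  shows "feval n (fscale a c) I \<phi> = a * feval n c I \<phi>"
proof -
  have "fsupp (fscale a c) \<subseteq> fsupp c"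
    by (rule fsupp_subI) (auto simp: fscale_def not_fsupp_val intro: in_fsupp)
  then have "feval n (fscale a c) I \<phi> = (\<Sum>\<mu>\<in>fsupp c. fscale a c \<mu> I * exp (\<i> * mu_dot_phi n \<mu> \<phi>))"
    using assms by (intro feval_sup) auto
  also have "\<dots> = a * feval n c I \<phi>"
    unfolding feval_def fscale_def by (simp add: sum_distrib_left mult.assoc)
  finally show ?thesis .
qed

lemma mdp_add: "mu_dot_phi n (\<lambda>l. a l + b l) \<phi> = mu_dot_phi n a \<phi> + mu_dot_phi n b \<phi>"
  unfolding mu_dot_phi_def by (simp add: sum.distrib distrib_right)

lemma feval_fmult:
  assumes fc: "finite (fsupp c)" and fd: "finite (fsupp d)"
  shows "feval n (fmult c d) I \<phi> = feval n c I \<phi> * feval n d I \<phi>"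
proof -
  define T where "T = (\<lambda>(a, b). (\<lambda>l. a l + b l)) ` (fsupp c \<times> fsupp d)"
  have fT: "finite T" unfolding T_def using fc fd by auto
  define E where "E \<mu> = exp (\<i> * mu_dot_phi n \<mu> \<phi>)" for \<mu>
  have "feval n (fmult c d) I \<phi> = (\<Sum>\<mu>\<in>T. fmult c d \<mu> I * E \<mu>)"
    unfolding E_def T_def using fsupp_fmult[OF fc] fT by (intro feval_sup) (auto simp: T_def)
  also have "\<dots> = (\<Sum>\<mu>\<in>T. \<Sum>\<nu>\<in>fsupp c. c \<nu> I * (d (\<mu> - \<nu>) I * E \<mu>))"
    using fc by (simp add: fmult_def sum_distrib_right mult.assoc)
  also have "\<dots> = (\<Sum>\<nu>\<in>fsupp c. c \<nu> I * (\<Sum>\<mu>\<in>T. d (\<mu> - \<nu>) I * E \<mu>))"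
    by (subst sum.swap) (simp add: sum_distrib_left)
  also have "\<dots> = (\<Sum>\<nu>\<in>fsupp c. c \<nu> I * (E \<nu> * feval n d I \<phi>))"
  proof (intro sum.cong refl arg_cong[where f="\<lambda>x. c _ I * x"])
    fix \<nu> assume nu: "\<nu> \<in> fsupp c"
    define sh where "sh \<rho> = (\<lambda>l. \<nu> l + \<rho> l)" for \<rho> :: "nat \<Rightarrow> int"
    have inj: "inj_on sh (fsupp d)" unfolding sh_def inj_on_def by (auto simp: fun_eq_iff)
    have sub: "sh ` fsupp d \<subseteq> T" unfolding sh_def T_def using nu by auto
    have "(\<Sum>\<mu>\<in>T. d (\<mu> - \<nu>) I * E \<mu>) = (\<Sum>\<mu>\<in>sh ` fsupp d. d (\<mu> - \<nu>) I * E \<mu>)"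
    proof (rule sum.mono_neutral_right[OF fT sub], intro ballI)
      fix \<mu> assume "\<mu> \<in> T - sh ` fsupp d"
      then have "\<mu> - \<nu> \<notin> fsupp d" unfolding sh_def by (auto simp: image_iff fun_eq_iff fun_diff_def)
      then show "d (\<mu> - \<nu>) I * E \<mu> = 0" by (simp add: not_fsupp_val)
    qed
    also have "\<dots> = (\<Sum>\<rho>\<in>fsupp d. d (sh \<rho> - \<nu>) I * E (sh \<rho>))"
      by (rule sum.reindex[OF inj, unfolded comp_def])
    also have "\<dots> = (\<Sum>\<rho>\<in>fsupp d. E \<nu> * (d \<rho> I * E \<rho>))"
    proof (intro sum.cong refl)
      fix \<rho>
      have "sh \<rho> - \<nu> = \<rho>" unfolding sh_def by (simp add: fun_eq_iff fun_diff_def)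
      moreover have "E (sh \<rho>) = E \<nu> * E \<rho>" unfolding E_def sh_def mdp_add
        by (simp add: distrib_left exp_add)
      ultimately show "d (sh \<rho> - \<nu>) I * E (sh \<rho>) = E \<nu> * (d \<rho> I * E \<rho>)" by simp
    qed
    also have "\<dots> = E \<nu> * feval n d I \<phi>" unfolding feval_def E_def by (simp add: sum_distrib_left)
    finally show "(\<Sum>\<mu>\<in>T. d (\<mu> - \<nu>) I * E \<mu>) = E \<nu> * feval n d I \<phi>" .
  qed
  also have "\<dots> = feval n c I \<phi> * feval n d I \<phi>"
    unfolding feval_def E_def by (simp add: sum_distrib_right mult.assoc)
  finally show ?thesis .
qed

lemma f0_a_res:
  assumes "uok n u" "f0data n u \<mu> I \<noteq> 0" "\<mu> a \<noteq> 0" "a + 2 \<le> k"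
  shows "\<mu> k = 0"
proof -
  obtain i m where im: "\<mu> = emode i m" using f0_nz[OF assms(1,2)] by blast
  have "a = i \<or> a = i + 1" using assms(3) im emode_nz by blast
  then show ?thesis using im assms(4) unfolding emode_def by auto
qed

lemma f0_a_hi:
  assumes "uok n u" "f0data n u \<mu> I \<noteq> 0" "\<mu> a \<noteq> 0" "a + 2 \<le> i"
  shows "\<mu> i = 0"
proof -
  obtain i' m where im: "\<mu> = emode i' m" using f0_nz[OF assms(1,2)] by blast
  have "a = i' \<or> a = i' + 1" using assms(3) im emode_nz by blast
  then show ?thesis using im assms(4) unfolding emode_def by auto
qed

lemma dphi_dphi_f0:
  assumes "uok n u" "a \<in> {1..n-1}"
  shows "dphi (a + 1) (dphi a (f0data n u)) \<mu> I =
    (\<Sum>m\<in>{m. u a m \<noteq> 0}. if \<mu> = emode a m then (of_int m)^2 * u a m else 0)"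
proof -
  define c where "c \<nu> = \<i> * of_int (\<nu> (a+1)) * (\<i> * of_int (\<nu> a))" for \<nu> :: "nat \<Rightarrow> int"
  have "dphi (a + 1) (dphi a (f0data n u)) \<mu> I = c \<mu> * f0data n u \<mu> I"
    unfolding dphi_def c_def by (simp add: mult.assoc)
  also have "\<dots> = (\<Sum>i=1..n-1. \<Sum>m\<in>{m. u i m \<noteq> 0}. if \<mu> = emode i m then c (emode i m) * u i m else 0)"
    unfolding f0_alt by (simp add: sum_distrib_left if_distrib cong: if_cong)
  also have "\<dots> = (\<Sum>i=1..n-1. if i = a then (\<Sum>m\<in>{m. u a m \<noteq> 0}. if \<mu> = emode a m then c (emode a m) * u a m else 0) else 0)"
  proof (intro sum.cong refl)
    fix i assume "i \<in> {1..n-1}"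
    show "(\<Sum>m\<in>{m. u i m \<noteq> 0}. if \<mu> = emode i m then c (emode i m) * u i m else 0) =
      (if i = a then (\<Sum>m\<in>{m. u a m \<noteq> 0}. if \<mu> = emode a m then c (emode a m) * u a m else 0) else 0)"
    proof (cases "i = a")
      case False
      have cz: "c (emode i m) = 0" for m
        using False unfolding c_def emode_def by auto
      show ?thesis using False unfolding cz by (simp only: mult_zero_left if_cancel sum.neutral_const if_False)
    next
      case True
      show ?thesis unfolding True by (simp only: if_True refl)
    qed
  qed
  also have "\<dots> = (\<Sum>m\<in>{m. u a m \<noteq> 0}. if \<mu> = emode a m then c (emode a m) * u a m else 0)"
    using assms(2) by simp
  also have "\<dots> = (\<Sum>m\<in>{m. u a m \<noteq> 0}. if \<mu> = emode a m then (of_int m)^2 * u a m else 0)"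
  proof (intro sum.cong refl)
    fix m
    have "c (emode a m) = \<i> * (\<i> * (of_int m * (- of_int m)))"
      unfolding c_def emode_def by (simp add: ac_simps)
    also have "\<dots> = (of_int m)^2" by (simp add: power2_eq_square)
    finally show "(if \<mu> = emode a m then c (emode a m) * u a m else 0) = (if \<mu> = emode a m then (of_int m)^2 * u a m else 0)"
      by simp
  qed
  finally show ?thesis .
qed

lemma mdp_emode:
  assumes "a \<in> {1..n-1}"
  shows "mu_dot_phi n (emode a m) \<phi> = of_int m * (\<phi> (a+1) - \<phi> a)"
proof -
  have "mu_dot_phi n (emode a m) \<phi> = (\<Sum>l=1..n. (if l = a + 1 then of_int m * \<phi> (a+1) else 0) + (if l = a then - of_int m * \<phi> a else 0))"
    unfolding mu_dot_phi_def emode_def by (intro sum.cong refl) auto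
  also have "\<dots> = of_int m * \<phi> (a+1) - of_int m * \<phi> a"
  proof -
    have "a + 1 \<in> {1..n}" "a \<in> {1..n}" using assms by auto
    then show ?thesis by (simp only: sum.distrib sum.delta finite_atLeastAtMost if_True) simp
  qed
  finally show ?thesis by (simp add: algebra_simps)
qed

lemma feval_P:
  assumes "uok n u" "a \<in> {1..n-1}"
  shows "feval n (dphi (a + 1) (dphi a (f0data n u))) I \<phi> = - Upot'' u a (\<phi> (a+1) - \<phi> a)"
proof -
  define M where "M = {m. u a m \<noteq> 0}"
  have fM: "finite M" using assms unfolding uok_def M_def by auto
  have m0: "0 \<notin> M" using assms unfolding uok_def M_def by auto
  define P where "P = dphi (a + 1) (dphi a (f0data n u))"
  have Peq: "P \<mu> I = (\<Sum>m\<in>M. if \<mu> = emode a m then (of_int m)^2 * u a m else 0)" for \<mu> I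
    unfolding P_def M_def by (rule dphi_dphi_f0[OF assms])
  have inj: "inj_on (emode a) M" unfolding inj_on_def emode_def by (auto simp: fun_eq_iff dest: spec[of _ "a+1"])
  have sub: "fsupp P \<subseteq> emode a ` M"
  proof (rule fsupp_subI)
    fix \<mu> I assume "P \<mu> I \<noteq> 0"
    then obtain m where "m \<in> M" "(if \<mu> = emode a m then (of_int m)^2 * u a m else 0) \<noteq> 0"
      unfolding Peq by (rule sum.not_neutral_contains_not_neutral)
    then show "\<mu> \<in> emode a ` M" by (auto split: if_splits)
  qed
  have "feval n P I \<phi> = (\<Sum>\<mu>\<in>emode a ` M. P \<mu> I * exp (\<i> * mu_dot_phi n \<mu> \<phi>))"
    using fM sub by (intro feval_sup) auto
  also have "\<dots> = (\<Sum>m\<in>M. P (emode a m) I * exp (\<i> * mu_dot_phi n (emode a m) \<phi>))"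
    by (rule sum.reindex[OF inj, unfolded comp_def])
  also have "\<dots> = (\<Sum>m\<in>M. (of_int m)^2 * u a m * exp (\<i> * (of_int m * (\<phi> (a+1) - \<phi> a))))"
  proof (intro sum.cong refl)
    fix m assume m: "m \<in> M"
    have "P (emode a m) I = (\<Sum>m'\<in>M. if m' = m then (of_int m')^2 * u a m' else 0)"
      unfolding Peq using inj m by (intro sum.cong refl) (auto simp: inj_on_def)
    also have "\<dots> = (of_int m)^2 * u a m" using m fM by simp
    finally show "P (emode a m) I * exp (\<i> * mu_dot_phi n (emode a m) \<phi>) =
        (of_int m)^2 * u a m * exp (\<i> * (of_int m * (\<phi> (a+1) - \<phi> a)))"
      using mdp_emode[OF assms(2)] by simp
  qed
  also have "\<dots> = - Upot'' u a (\<phi> (a+1) - \<phi> a)"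
    unfolding Upot''_def M_def[symmetric]
    by (simp add: sum_negf[symmetric] power_mult_distrib mult.assoc)
  finally show ?thesis unfolding P_def .
qed

lemma dI_Qop_formula:
  assumes fN: "finite N" and I: "I \<in> Ug n N" and b: "b \<in> {1..n}" and ind: "indep n N b F"
    and Q: "\<forall>\<mu>\<in>fsupp F. \<mu> k \<noteq> 0 \<longrightarrow> \<mu> \<in> N"
  shows "dI b (Qop n k F) \<mu> I = fscale (-1) (Qop n k (Qop n k (dphi b F))) \<mu> I"
proof (cases "\<mu> k \<noteq> 0 \<and> \<mu> \<in> fsupp F")
  case False
  then have z: "Qop n k F \<mu> = (\<lambda>_. 0)"
    unfolding Qop_def by (auto simp: fun_eq_iff not_fsupp_val)
  have "dI b (Qop n k F) \<mu> I = 0" unfolding dI_def z by (rule deriv_zero_fun)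
  moreover have "Qop n k (Qop n k (dphi b F)) \<mu> I = 0"
    using False unfolding Qop_def dphi_def by (auto simp: not_fsupp_val)
  ultimately show ?thesis unfolding fscale_def by simp
next
  case True
  then have mN: "\<mu> \<in> N" and mk: "\<mu> k \<noteq> 0" using Q by auto
  define D where "D = dotI n I \<mu>"
  have D0: "D \<noteq> 0" using I mN unfolding D_def Ug_def by auto
  have ev: "eventually (\<lambda>z. Qop n k F \<mu> (I(b:=z)) = (- \<i> * F \<mu> I) * inverse (dotI n (I(b:=z)) \<mu>)) (nhds (I b))"
    using ev_line_Ug[OF fN I, of b]
  proof eventually_elim
    case (elim z)
    then have "F \<mu> (I(b:=z)) = F \<mu> I" using indepD[OF ind I] by blast
    then show ?case using mk unfolding Qop_def dotI_def by (simp add: divide_inverse)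
  qed
  have d: "((\<lambda>z. (- \<i> * F \<mu> I) * inverse (dotI n (I(b:=z)) \<mu>)) has_field_derivative
      (- \<i> * F \<mu> I) * (- (of_int (\<mu> b) * inverse (dotI n (I(b:=I b)) \<mu> ^ Suc (Suc 0))))) (at (I b))"
  proof -
    have dd: "((\<lambda>z. dotI n (I(b:=z)) \<mu>) has_field_derivative of_int (\<mu> b)) (at (I b))"
      using dotI_deriv[where n=n and I=I and i=b and \<nu>=\<mu> and x="I b"] b by simp
    show ?thesis using D0 unfolding D_def by (intro DERIV_cmult DERIV_inverse_fun dd) simp
  qed
  have "dI b (Qop n k F) \<mu> I = (- \<i> * F \<mu> I) * (- (of_int (\<mu> b) * inverse (D ^ 2)))"
    unfolding dI_def D_def using DERIV_imp_deriv[OF DERIV_cong_ev[OF refl ev refl, THEN iffD2, OF d]]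
    by (simp add: numeral_2_eq_2)
  also have "\<dots> = fscale (-1) (Qop n k (Qop n k (dphi b F))) \<mu> I"
    using mk D0 unfolding fscale_def Qop_def dphi_def dotI_def[symmetric] D_def[symmetric]
    by (simp add: field_simps power2_eq_square)
  finally show ?thesis .
qed

lemma fsupp_Qop: "fsupp (Qop n k c) \<subseteq> fsupp c"
proof (rule fsupp_subI)
  fix \<mu> I assume "Qop n k c \<mu> I \<noteq> 0"
  then have "c \<mu> I \<noteq> 0" unfolding Qop_def by (auto split: if_splits)
  then show "\<mu> \<in> fsupp c" by (rule in_fsupp)
qed

lemma fin_Qop: "finite (fsupp c) \<Longrightarrow> finite (fsupp (Qop n k c))"
  by (rule finite_subset[OF fsupp_Qop])

lemma fin_fscale: "finite (fsupp c) \<Longrightarrow> finite (fsupp (fscale a c))"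
proof -
  assume f: "finite (fsupp c)"
  have "fsupp (fscale a c) \<subseteq> fsupp c"
  proof (rule fsupp_subI)
    fix \<mu> I assume "fscale a c \<mu> I \<noteq> 0"
    then have "c \<mu> I \<noteq> 0" unfolding fscale_def by auto
    then show "\<mu> \<in> fsupp c" by (rule in_fsupp)
  qed
  then show ?thesis using f by (rule finite_subset)
qed

lemma dI_const_zero: "(\<And>\<mu> I J. c \<mu> I = c \<mu> J) \<Longrightarrow> dI i c \<mu> I = 0"
proof -
  assume c: "\<And>\<mu> I J. c \<mu> I = c \<mu> J"
  have "(\<lambda>z. c \<mu> (I(i:=z))) = (\<lambda>z. c \<mu> I)" using c by (simp add: fun_eq_iff)
  then show ?thesis unfolding dI_def by (simp add: deriv_zero_fun[symmetric] DERIV_imp_deriv[OF DERIV_const])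
qed

lemma rep_Gl:
  assumes "INV n k u N m"
  shows "rep n N 0 (Gl n k u m l)"
proof -
  have IM: "\<And>m'. m' \<le> m \<Longrightarrow> INVm n k u N m'" using assms unfolding INV_def by auto
  show ?thesis
    unfolding Gl_def
  proof (intro rep_add rep_sub rep_sum rep_scale rep_nresp rep_resp)
    fix m' assume "m' \<in> {..<m}"
    then have "INVm n k u N m'" by (intro IM) auto
    then show "rep n N 0 (fseq n k u m')" unfolding INVm_def by (auto intro: rep_weak)
  next
    have "INVm n k u N m" by (intro IM) auto
    then show "rep n N 0 (fseq n k u m)" unfolding INVm_def by (auto intro: rep_weak)
    then show "rep n N 0 (fseq n k u m)" .
  qed simp
qed

theorem lemma7p4:
  fixes n k :: nat and u :: "nat \<Rightarrow> int \<Rightarrow> complex"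
  assumes "n \<ge> 2" and "2 \<le> k" and "k \<le> n"
    and "\<forall>i\<in>{1..n-1}. finite {m. u i m \<noteq> 0}"
    and "\<forall>i\<in>{1..n-1}. u i 0 = 0"
    and "\<forall>i\<in>{1..n-1}. \<forall>m. u i (- m) = cnj (u i m)"
    and "\<forall>i\<in>{1..n-1}. \<forall>x::real. \<not> (Upot' u i (of_real x) = 0 \<and> Upot'' u i (of_real x) = 0)"
  shows "\<forall>j. 1 \<le> j \<and> j \<le> k - 2 \<longrightarrow>
    bigO_fin n k
      (\<lambda>I \<phi>. feval n (dphi (k - j - 1) (fseq n k u j)) I \<phi>
         - Upot'' u (k - j - 1) (\<phi> (k - j) - \<phi> (k - j - 1))
           * feval n (Qop n k (Qop n k (dphi (k - j) (fseq n k u (j - 1))))) I \<phi>)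
      (- (2 * real j + 1))"
proof (intro allI impI)
  fix j assume j: "1 \<le> j \<and> j \<le> k - 2"
  have uok: "uok n u" using assms(4,5) unfolding uok_def by auto
  obtain jj where jj: "j = Suc jj" using j by (cases j) auto
  define a where "a = k - j - 1"
  have a1: "1 \<le> a" and a2: "a + 2 \<le> k" and an: "a \<in> {1..n-1}" and an1: "a + 1 \<in> {1..n}"
    and kn: "k \<in> {1..n}" and ajj: "a = k - jj - 2"
    using j assms(2,3) unfolding a_def jj by auto
  obtain N where inv: "INV n k u N (Suc jj)" using INV_all[OF uok] by blast
  have gN: "goodN k N" using inv unfolding INV_def by auto
  have fN: "finite N" using gN unfolding goodN_def by auto
  have IM: "\<And>m'. m' \<le> Suc jj \<Longrightarrow> INVm n k u N m'" using inv unfolding INV_def by auto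
  define F0 where "F0 = f0data n u"
  define Fjj where "Fjj = fseq n k u jj"
  define ch where "ch = Qop n k Fjj"
  define h where "h = dphi a F0"
  define P where "P = dphi (a + 1) h"
  define X where "X = dI (a + 1) ch"
  define QQ where "QQ = Qop n k (Qop n k (dphi (a + 1) Fjj))"
  define Rest where "Rest = (\<lambda>\<mu> I. \<Sum>l\<in>{2..k-1}. fscale (1 / of_nat (fact l)) (adpow n ch l h) \<mu> I)"
  have IMjj: "INVm n k u N jj" by (rule IM) simp
  have invjj: "INV n k u N jj" using inv unfolding INV_def by auto
  note rGl = rep_Gl[OF invjj]
  have rF: "rep n N (2 * jj) Fjj" and QF: "\<forall>\<mu>\<in>fsupp Fjj. \<mu> k \<noteq> 0 \<longrightarrow> \<mu> \<in> N"
    and vF3: "vanish n N (\<lambda>\<mu>. \<mu> k \<noteq> 0 \<and> lowP a \<mu>) Fjj"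
    and iF: "\<And>i. 1 \<le> i \<Longrightarrow> i \<le> a + 1 \<Longrightarrow> indep n N i Fjj"
  proof -
    have kj: "jj + 3 \<le> k" using a1 ajj by simp
    show "rep n N (2 * jj) Fjj" "\<forall>\<mu>\<in>fsupp Fjj. \<mu> k \<noteq> 0 \<longrightarrow> \<mu> \<in> N"
      "vanish n N (\<lambda>\<mu>. \<mu> k \<noteq> 0 \<and> lowP a \<mu>) Fjj"
      using IMjj unfolding INVm_def Fjj_def ajj by auto
    show "\<And>i. 1 \<le> i \<Longrightarrow> i \<le> a + 1 \<Longrightarrow> indep n N i Fjj"
    proof -
      fix i assume "1 \<le> i" "i \<le> a + 1"
      then have "1 \<le> i \<and> i \<le> k - jj - 1" using kj ajj by simp
      then show "indep n N i Fjj" using IMjj unfolding INVm_def Fjj_def by blast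
    qed
  qed
  have rch: "rep n N (Suc (2 * jj)) ch" unfolding ch_def by (rule rep_Qop[OF rF QF])
  have vch: "vanish n N (lowP a) ch" unfolding ch_def by (rule van_Qop[OF vF3])
  have vcha: "vanish n N (\<lambda>\<mu>. \<mu> a \<noteq> 0) ch"
    using vch by (rule van_mono) (use a1 in \<open>auto simp: lowP_def\<close>)
  have ich: "indep n N i ch" if "1 \<le> i" "i \<le> a" for i
    unfolding ch_def
  proof (rule ind_Qop)
    show "indep n N i Fjj" using that by (intro iF) auto
    show "vanish n N (\<lambda>\<mu>. \<mu> k \<noteq> 0 \<and> \<mu> i \<noteq> 0) Fjj"
      using vF3 by (rule van_mono) (use that in \<open>auto simp: lowP_def\<close>)
  qed
  have rF0: "rep n N 0 F0" unfolding F0_def by (rule rep_f0[OF uok])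
  have rh: "rep n N 0 h" unfolding h_def by (rule rep_dphi[OF rF0])
  have F0c: "F0 \<mu> I = F0 \<mu> J" for \<mu> I J unfolding F0_def by (rule f0_const)
  have hc: "h \<mu> I = h \<mu> J" for \<mu> I J unfolding h_def dphi_def using F0c by simp
  have eGh: "eqv n N (dphi a (Gl n k u jj l)) h" for l
    unfolding eqv_def
  proof (intro allI ballI)
    fix \<mu> I assume I: "I \<in> Ug n N"
    have "Gl n k u jj l \<mu> I = F0 \<mu> I" if ma: "\<mu> a \<noteq> 0"
    proof -
      have res: "\<mu> k = 0" if "F0 \<mu> I \<noteq> 0" using f0_a_res[OF uok that[unfolded F0_def] ma a2] .
      have nr0: "nresp k F0 \<mu> I = 0" unfolding nresp_def using res by auto
      have r0: "resp k F0 \<mu> I = F0 \<mu> I" unfolding resp_def using res by auto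
      show ?thesis
      proof (cases "jj = 0")
        case True
        then show ?thesis using nr0 unfolding Gl_def fadd_def fsub_def fscale_def F0_def by simp
      next
        case False
        have z: "fseq n k u m' \<mu> I = 0" if "1 \<le> m'" "m' \<le> jj" for m'
        proof -
          have "INVm n k u N m'" using that by (intro IM) auto
          then have "vanish n N (lowP (k - m' - 2)) (fseq n k u m')" unfolding INVm_def using that by auto
          moreover have "lowP (k - m' - 2) \<mu>" using ma a1 that ajj unfolding lowP_def by (intro exI[of _ a]) auto
          ultimately show ?thesis using I by (simp add: vanishD)
        qed
        have "(\<Sum>m'<jj. resp k (fseq n k u m') \<mu> I) = resp k (fseq n k u 0) \<mu> I + (\<Sum>m'\<in>{..<jj} - {0}. resp k (fseq n k u m') \<mu> I)"
          using False by (simp add: sum.remove)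
        also have "(\<Sum>m'\<in>{..<jj} - {0}. resp k (fseq n k u m') \<mu> I) = 0"
          using z by (intro sum.neutral) (auto simp: resp_def)
        finally have s: "(\<Sum>m'<jj. resp k (fseq n k u m') \<mu> I) = F0 \<mu> I" using r0 unfolding F0_def by simp
        have "fseq n k u jj \<mu> I = 0" using z[of jj] False by simp
        then show ?thesis unfolding Gl_def fsub_def fadd_def s fscale_def nresp_def by simp
      qed
    qed
    then show "dphi a (Gl n k u jj l) \<mu> I = h \<mu> I" unfolding h_def dphi_def by auto
  qed
  define T where "T = (\<lambda>\<mu> I. \<Sum>l\<in>{1..k-1}. fscale (1 / of_nat (fact l)) (adpow n ch l h) \<mu> I)"
  have E1: "eqv n N (dphi a (fseq n k u j)) T"
    unfolding eqv_def
  proof (intro allI ballI)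
    fix \<mu> I assume I: "I \<in> Ug n N"
    have "dphi a (fseq n k u j) \<mu> I = (\<Sum>l\<in>{1..k-1}. fscale (1 / of_nat (fact l)) (dphi a (adpow n ch l (Gl n k u jj l))) \<mu> I)"
      unfolding jj fseq_Suc ch_def Fjj_def dphi_def fscale_def by (simp add: sum_distrib_left ac_simps)
    also have "\<dots> = T \<mu> I"
      unfolding T_def
    proof (intro sum.cong refl)
      fix l
      have e1: "eqv n N (dphi a (adpow n ch l (Gl n k u jj l))) (adpow n ch l (dphi a (Gl n k u jj l)))"
        by (rule dphi_adpow[OF fN rGl rch vcha])
      have e2: "eqv n N (adpow n ch l (dphi a (Gl n k u jj l))) (adpow n ch l h)"
        by (rule eqv_adpow[OF fN rep_dphi[OF rGl] rh rch eGh])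
      show "fscale (1 / of_nat (fact l)) (dphi a (adpow n ch l (Gl n k u jj l))) \<mu> I =
            fscale (1 / of_nat (fact l)) (adpow n ch l h) \<mu> I"
        unfolding fscale_def using eqvD[OF eqv_trans[OF e1 e2] I] by simp
    qed
    finally show "dphi a (fseq n k u j) \<mu> I = T \<mu> I" .
  qed
  have E3: "pbracket n h ch \<mu> I = fmult P X \<mu> I" if I: "I \<in> Ug n N" for \<mu> I
  proof -
    define g where "g i = fsub (fmult (dphi i h) (dI i ch)) (fmult (dI i h) (dphi i ch)) \<mu> I" for i
    have z2: "fmult (dI i h) (dphi i ch) \<mu> I = 0" for i
      unfolding fmult_def using dI_const_zero[OF hc] by simp
    have gz: "g i = 0" if i: "i \<in> {1..n} - {a + 1}" for i
    proof (cases "i \<le> a")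
      case True
      have dz: "dI i ch \<nu> I = 0" for \<nu> using ind_dI_zero[OF fN ich I] i True by auto
      show ?thesis unfolding g_def fsub_def z2 by (simp add: fmult_def dz)
    next
      case False
      then have i2: "a + 2 \<le> i" using i by auto
      have dz: "dphi i h \<nu> I = 0" for \<nu>
      proof (cases "F0 \<nu> I \<noteq> 0 \<and> \<nu> a \<noteq> 0")
        case True
        then have "f0data n u \<nu> I \<noteq> 0" "\<nu> a \<noteq> 0" unfolding F0_def by auto
        then have "\<nu> i = 0" using f0_a_hi[OF uok _ _ i2] by blast
        then show ?thesis unfolding h_def dphi_def by simp
      next
        case False
        then show ?thesis unfolding h_def dphi_def by auto
      qed
      show ?thesis unfolding g_def fsub_def z2 by (simp add: fmult_def dz)
    qed
    have "pbracket n h ch \<mu> I = (\<Sum>i=1..n. g i)" unfolding pbracket_def g_def ..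
    also have "\<dots> = g (a + 1) + (\<Sum>i\<in>{1..n} - {a + 1}. g i)"
      using an1 by (simp add: sum.remove)
    also have "(\<Sum>i\<in>{1..n} - {a + 1}. g i) = 0" using gz by (intro sum.neutral) blast
    finally show ?thesis unfolding g_def fsub_def z2 P_def X_def by simp
  qed
  have rRest: "rep n N (2 * j + 1) Rest"
    unfolding Rest_def
  proof (intro rep_sum rep_scale)
    fix l assume l: "l \<in> {2..k-1}"
    have "rep n N (0 + l * Suc (Suc (2 * jj))) (adpow n ch l h)"
      by (rule rep_adpow[OF fN rh rch])
    moreover have "2 * j + 1 \<le> 0 + l * Suc (Suc (2 * jj))"
    proof -
      have "2 * Suc (Suc (2 * jj)) \<le> l * Suc (Suc (2 * jj))" using l by (intro mult_right_mono) auto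
      then show ?thesis unfolding jj by simp
    qed
    ultimately show "rep n N (2 * j + 1) (adpow n ch l h)" by (rule rep_weak)
  qed simp
  have E2: "T \<mu> I = fmult P X \<mu> I + Rest \<mu> I" if I: "I \<in> Ug n N" for \<mu> I
  proof -
    have k3: "{1..k-1} = insert 1 {2..k-1}" "1 \<notin> {2..k-1::nat}" using a2 by auto
    have "T \<mu> I = fscale (1 / of_nat (fact 1)) (adpow n ch 1 h) \<mu> I + Rest \<mu> I"
      unfolding T_def Rest_def k3(1) using k3(2) by (simp add: sum.insert)
    also have "fscale (1 / of_nat (fact 1)) (adpow n ch 1 h) \<mu> I = pbracket n h ch \<mu> I"
      unfolding fscale_def by simp
    finally show ?thesis using E3[OF I] by simp
  qed
  have Eall: "eqv n N (dphi a (fseq n k u j)) (fadd (fmult P X) Rest)"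
    using E1 E2 unfolding eqv_def fadd_def by simp
  have E4: "eqv n N X (fscale (-1) QQ)"
    unfolding eqv_def X_def ch_def QQ_def
    using dI_Qop_formula[OF fN _ an1 iF[of "a+1"] QF] a1 by auto
  have fF0: "finite (fsupp F0)" using rep_fin[OF rF0] .
  have fP: "finite (fsupp P)" unfolding P_def h_def by (intro fin_dphi fF0)
  have fch: "finite (fsupp ch)" using rep_fin[OF rch] .
  have fX: "finite (fsupp X)" unfolding X_def by (intro fin_dI fch)
  have fQQ: "finite (fsupp QQ)" unfolding QQ_def by (intro fin_Qop fin_dphi rep_fin[OF rF])
  have fRest: "finite (fsupp Rest)" using rep_fin[OF rRest] .
  have fFj: "finite (fsupp (dphi a (fseq n k u j)))"
  proof -
    have "INVm n k u N (Suc jj)" by (rule IM) simp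
    then show ?thesis unfolding INVm_def jj by (auto intro: fin_dphi rep_fin)
  qed
  have fPX: "finite (fsupp (fadd (fmult P X) Rest))" by (intro fin_fadd fin_fmult fP fX fRest)
  obtain H where H: "\<And>\<mu>. alg n N (2 * j + 1) (H \<mu>)" "\<And>\<mu> I. I \<in> Ug n N \<Longrightarrow> Rest \<mu> I = H \<mu> I"
    using rep_choice[OF rRest] by blast
  have main: "bigO_fin n k
      (\<lambda>I \<phi>. feval n (dphi a (fseq n k u j)) I \<phi>
         - Upot'' u a (\<phi> (a + 1) - \<phi> a) * feval n QQ I \<phi>) (- real (2 * j + 1))"
  proof (rule finish[OF gN kn fRest])
    show "\<forall>\<mu>\<in>fsupp Rest. alg n N (2 * j + 1) (H \<mu>)" using H by blast
    show "\<forall>I \<phi>. I \<in> Ug n N \<longrightarrow> feval n (dphi a (fseq n k u j)) I \<phi> - Upot'' u a (\<phi> (a + 1) - \<phi> a) * feval n QQ I \<phi> =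
        (\<Sum>\<mu>\<in>fsupp Rest. H \<mu> I * exp (\<i> * mu_dot_phi n \<mu> \<phi>))"
    proof (intro allI impI)
      fix I \<phi> assume I: "I \<in> Ug n N"
      have "feval n (dphi a (fseq n k u j)) I \<phi> = feval n (fadd (fmult P X) Rest) I \<phi>"
        by (rule feval_eqv[OF fFj fPX Eall I])
      also have "\<dots> = feval n P I \<phi> * feval n X I \<phi> + feval n Rest I \<phi>"
        using fP fX fRest by (simp add: feval_fadd fin_fmult feval_fmult)
      also have "feval n X I \<phi> = - feval n QQ I \<phi>"
      proof -
        have "feval n X I \<phi> = feval n (fscale (-1) QQ) I \<phi>"
          by (rule feval_eqv[OF fX fin_fscale[OF fQQ] E4 I])
        also have "\<dots> = (-1) * feval n QQ I \<phi>" by (rule feval_fscale[OF fQQ])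
        finally show ?thesis by simp
      qed
      also have "feval n P I \<phi> = - Upot'' u a (\<phi> (a + 1) - \<phi> a)"
        unfolding P_def h_def F0_def by (rule feval_P[OF uok an])
      also have "feval n Rest I \<phi> = (\<Sum>\<mu>\<in>fsupp Rest. H \<mu> I * exp (\<i> * mu_dot_phi n \<mu> \<phi>))"
        unfolding feval_def using H(2)[OF I] by simp
      finally show "feval n (dphi a (fseq n k u j)) I \<phi> - Upot'' u a (\<phi> (a + 1) - \<phi> a) * feval n QQ I \<phi> =
        (\<Sum>\<mu>\<in>fsupp Rest. H \<mu> I * exp (\<i> * mu_dot_phi n \<mu> \<phi>))" by simp
    qed
  qed
  have e1: "k - j - 1 = a" unfolding a_def ..
  have jk: "j + 2 \<le> k" using j by arith
  have e2: "k - j = a + 1" using jk unfolding a_def by simp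
  have e3: "j - 1 = jj" unfolding jj by simp
  have e4: "- real (2 * j + 1) = - (2 * real j + 1)" by simp
  show "bigO_fin n k
      (\<lambda>I \<phi>. feval n (dphi (k - j - 1) (fseq n k u j)) I \<phi>
         - Upot'' u (k - j - 1) (\<phi> (k - j) - \<phi> (k - j - 1))
           * feval n (Qop n k (Qop n k (dphi (k - j) (fseq n k u (j - 1))))) I \<phi>)
      (- (2 * real j + 1))"
    unfolding e1 unfolding e2 e3 e4[symmetric] using main unfolding QQ_def Fjj_def .
qed

end
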